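(* Let $\kappa>0$ (possibly depending on $\beta$) with $\tilde\kappa=\kappa\beta>\frac1\pi$, let $\beta>0$ be small enough, and let $\varphi_\beta$ be a minimizer of $F_{\beta,\kappa}$ in $\mathcal J$. Let $\frac T2$ be the point of $(0,1)$ such that $\varphi_\beta(\frac T2)=\frac\pi2$. Then $\varphi_\beta(x)=\pi-\varphi_\beta(T-x)$ for all $x\in[0,T]$; in particular $\varphi_\beta(T)=\pi$. Furthermore $\varphi_\beta(x+T)=\pi+\varphi_\beta(x)$ for all $x\in[0,1-T]$.
   Context: For parameters $\beta>0$ and $\kappa>0$ define, for $\varphi\in H^1((0,1))$, $$F_{\beta,\kappa}(\varphi)=\frac18\int_0^1\left(\varphi'(x)^2+\frac{1}{\beta^2}\sin^2\varphi(x)\right)dx-\frac{\kappa}{2}\int_0^1\varphi'(x)\,dx,$$ and $\mathcal J=\{\varphi\in H^1((0,1)):\varphi(0)=0\}$. (Minimizers are increasing, so the point $T/2$ is unique when it exists.) *)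

theory Defs
  imports "HOL-Analysis.Analysis"
begin

text \<open>One-dimensional Sobolev space H^1((0,1)), via its continuous representative:
  phi has weak derivative g (g square integrable on (0,1)) iff
  phi x = phi 0 + integral of g over [0,x] for all x in [0,1].\<close>

definition has_H1_deriv :: "(real \<Rightarrow> real) \<Rightarrow> (real \<Rightarrow> real) \<Rightarrow> bool" where
  "has_H1_deriv phi g \<longleftrightarrow>
     set_integrable lborel {0..1} g \<and>
     set_integrable lborel {0..1} (\<lambda>x. (g x)\<^sup>2) \<and>
     (\<forall>x\<in>{0..1}. phi x = phi 0 + (LINT t:{0..x}|lborel. g t))"

definition H1 :: "(real \<Rightarrow> real) set" where
  "H1 = {phi. \<exists>g. has_H1_deriv phi g}"

definition J_class :: "(real \<Rightarrow> real) set" where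
  "J_class = {phi \<in> H1. phi 0 = 0}"

text \<open>The functional F_{beta,kappa}, evaluated with a weak derivative g of phi
  (its value does not depend on the a.e. choice of g).\<close>
definition F_energy :: "real \<Rightarrow> real \<Rightarrow> (real \<Rightarrow> real) \<Rightarrow> (real \<Rightarrow> real) \<Rightarrow> real" where
  "F_energy \<beta> \<kappa> phi g =
     1/8 * (LINT x:{0..1}|lborel. (g x)\<^sup>2 + (sin (phi x))\<^sup>2 / \<beta>\<^sup>2)
     - \<kappa>/2 * (LINT x:{0..1}|lborel. g x)"

definition is_minimizer :: "real \<Rightarrow> real \<Rightarrow> (real \<Rightarrow> real) \<Rightarrow> bool" where
  "is_minimizer \<beta> \<kappa> phi \<longleftrightarrow>
     phi \<in> J_class \<and>
     (\<forall>g. has_H1_deriv phi g \<longrightarrow>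
        (\<forall>psi h. psi \<in> J_class \<longrightarrow> has_H1_deriv psi h \<longrightarrow>
            F_energy \<beta> \<kappa> phi g \<le> F_energy \<beta> \<kappa> psi h))"

end

theory Submission
  imports Defs
begin


lemma H1_basic:
  assumes "has_H1_deriv psi h"
  shows "h integrable_on {0..1}" "(\<lambda>x. (h x)\<^sup>2) integrable_on {0..1}"
    "\<And>x. x \<in> {0..1} \<Longrightarrow> psi x = psi 0 + integral {0..x} h"
    "continuous_on {0..1} psi"
proof -
  have i1: "set_integrable lborel {0..1} h" and i2: "set_integrable lborel {0..1} (\<lambda>x. (h x)\<^sup>2)"
    and rep: "\<forall>x\<in>{0..1}. psi x = psi 0 + (LINT t:{0..x}|lborel. h t)"
    using assms unfolding has_H1_deriv_def by blast+
  show "h integrable_on {0..1}" using set_borel_integral_eq_integral(1)[OF i1] .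
  show "(\<lambda>x. (h x)\<^sup>2) integrable_on {0..1}" using set_borel_integral_eq_integral(1)[OF i2] .
  have R: "psi x = psi 0 + integral {0..x} h" if "x \<in> {0..1}" for x
  proof -
    have "set_integrable lborel {0..x} h"
      by (rule set_integrable_subset[OF i1]) (use that in auto)
    then have "(LINT t:{0..x}|lborel. h t) = integral {0..x} h"
      by (rule set_borel_integral_eq_integral(2))
    moreover have "psi x = psi 0 + (LINT t:{0..x}|lborel. h t)" using rep that by blast
    ultimately show ?thesis by simp
  qed
  then show "\<And>x. x \<in> {0..1} \<Longrightarrow> psi x = psi 0 + integral {0..x} h" by blast
  have "continuous_on {0..1} (\<lambda>x. psi 0 + integral {0..x} h)"
    by (intro continuous_intros indefinite_integral_continuous_1 set_borel_integral_eq_integral(1)[OF i1])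
  moreover have "continuous_on {0..1} psi = continuous_on {0..1} (\<lambda>x. psi 0 + integral {0..x} h)"
    by (intro continuous_on_cong refl) (rule R)
  ultimately show "continuous_on {0..1} psi" by simp
qed

lemma F_eq:
  assumes "has_H1_deriv psi h"
  shows "F_energy \<beta> \<kappa> psi h = 1/8 * (integral {0..1} (\<lambda>x. (h x)\<^sup>2)
           + integral {0..1} (\<lambda>x. (sin (psi x))\<^sup>2) / \<beta>\<^sup>2) - \<kappa>/2 * (psi 1 - psi 0)"
proof -
  note B = H1_basic[OF assms]
  have i1: "set_integrable lborel {0..1} h" and i2: "set_integrable lborel {0..1} (\<lambda>x. (h x)\<^sup>2)"
    using assms unfolding has_H1_deriv_def by blast+
  have cs: "continuous_on {0..1} (\<lambda>x. (sin (psi x))\<^sup>2 / \<beta>\<^sup>2)"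
  proof -
    have "continuous_on {0..1} (\<lambda>x. (sin (psi x))\<^sup>2 * (1 / \<beta>\<^sup>2))"
      by (intro continuous_intros B(4))
    then show ?thesis by simp
  qed
  have i3: "set_integrable lborel {0..1} (\<lambda>x. (sin (psi x))\<^sup>2 / \<beta>\<^sup>2)"
    by (rule borel_integrable_atLeastAtMost'[OF cs])
  have "(LINT x:{0..1}|lborel. (h x)\<^sup>2 + (sin (psi x))\<^sup>2 / \<beta>\<^sup>2)
      = integral {0..1} (\<lambda>x. (h x)\<^sup>2 + (sin (psi x))\<^sup>2 / \<beta>\<^sup>2)"
    by (rule set_borel_integral_eq_integral(2)[OF set_integral_add(1)[OF i2 i3]])
  also have "\<dots> = integral {0..1} (\<lambda>x. (h x)\<^sup>2) + integral {0..1} (\<lambda>x. (sin (psi x))\<^sup>2 / \<beta>\<^sup>2)"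
    by (rule integral_add[OF B(2) integrable_continuous_interval[OF cs]])
  also have "integral {0..1} (\<lambda>x. (sin (psi x))\<^sup>2 / \<beta>\<^sup>2) = integral {0..1} (\<lambda>x. (sin (psi x))\<^sup>2) / \<beta>\<^sup>2"
    by simp
  finally have e1: "(LINT x:{0..1}|lborel. (h x)\<^sup>2 + (sin (psi x))\<^sup>2 / \<beta>\<^sup>2) = integral {0..1} (\<lambda>x. (h x)\<^sup>2)
           + integral {0..1} (\<lambda>x. (sin (psi x))\<^sup>2) / \<beta>\<^sup>2" .
  have e2: "(LINT x:{0..1}|lborel. h x) = psi 1 - psi 0"
  proof -
    have "psi 1 = psi 0 + integral {0..1} h" using B(3)[of 1] by auto
    then show ?thesis using set_borel_integral_eq_integral(2)[OF i1] by linarith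
  qed
  show ?thesis unfolding F_energy_def e1 e2 by (rule refl)
qed




lemma set_integrable_prod:
  fixes g k :: "real \<Rightarrow> real"
  assumes "set_integrable lborel A g" "set_integrable lborel A k"
    "set_integrable lborel A (\<lambda>x. (g x)\<^sup>2)" "set_integrable lborel A (\<lambda>x. (k x)\<^sup>2)"
  shows "set_integrable lborel A (\<lambda>x. g x * k x)"
proof (rule set_integrable_bound)
  show "set_integrable lborel A (\<lambda>x. (g x)\<^sup>2 + (k x)\<^sup>2)"
    using set_integral_add(1)[OF assms(3,4)] .
  have m1: "(\<lambda>x. indicator A x *\<^sub>R g x) \<in> borel_measurable lborel"
    using assms(1) unfolding set_integrable_def by (rule borel_measurable_integrable)
  have m2: "(\<lambda>x. indicator A x *\<^sub>R k x) \<in> borel_measurable lborel"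
    using assms(2) unfolding set_integrable_def by (rule borel_measurable_integrable)
  have "(\<lambda>x. (indicator A x *\<^sub>R g x) * (indicator A x *\<^sub>R k x)) \<in> borel_measurable lborel"
    using m1 m2 by measurable
  moreover have "(\<lambda>x. (indicator A x *\<^sub>R g x) * (indicator A x *\<^sub>R k x)) = (\<lambda>x. indicator A x *\<^sub>R (g x * k x))"
    by (auto simp: indicator_def)
  ultimately show "set_borel_measurable lborel A (\<lambda>x. g x * k x)"
    unfolding set_borel_measurable_def by simp
  have "\<bar>g x * k x\<bar> \<le> (g x)\<^sup>2 + (k x)\<^sup>2" for x
  proof -
    have "0 \<le> (\<bar>g x\<bar> - \<bar>k x\<bar>)\<^sup>2" by simp
    then have "\<bar>g x\<bar> * \<bar>k x\<bar> * 2 \<le> (g x)\<^sup>2 + (k x)\<^sup>2"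
      by (simp add: power2_eq_square algebra_simps)
    moreover have "0 \<le> \<bar>g x\<bar> * \<bar>k x\<bar>" by simp
    ultimately show ?thesis unfolding abs_mult by linarith
  qed
  then show "AE x in lborel. x \<in> A \<longrightarrow> norm (g x * k x) \<le> norm ((g x)\<^sup>2 + (k x)\<^sup>2)"
    by auto
qed

lemma H1_lin:
  assumes "has_H1_deriv phi g" "has_H1_deriv eta k"
  shows "has_H1_deriv (\<lambda>x. phi x + e * eta x) (\<lambda>x. g x + e * k x)"
proof -
  have g1: "set_integrable lborel {0..1} g" and g2: "set_integrable lborel {0..1} (\<lambda>x. (g x)\<^sup>2)"
    and gr: "\<forall>x\<in>{0..1}. phi x = phi 0 + (LINT t:{0..x}|lborel. g t)"
    using assms(1) unfolding has_H1_deriv_def by blast+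
  have k1: "set_integrable lborel {0..1} k" and k2: "set_integrable lborel {0..1} (\<lambda>x. (k x)\<^sup>2)"
    and kr: "\<forall>x\<in>{0..1}. eta x = eta 0 + (LINT t:{0..x}|lborel. k t)"
    using assms(2) unfolding has_H1_deriv_def by blast+
  have gk: "set_integrable lborel {0..1} (\<lambda>x. g x * k x)"
    by (rule set_integrable_prod[OF g1 k1 g2 k2])
  have s1: "set_integrable lborel {0..1} (\<lambda>x. g x + e * k x)"
    by (intro set_integral_add(1) g1 set_integrable_mult_right k1)
  have "set_integrable lborel {0..1} (\<lambda>x. (g x)\<^sup>2 + ((2*e) * (g x * k x) + e\<^sup>2 * (k x)\<^sup>2))"
    by (intro set_integral_add(1) g2 set_integrable_mult_right gk k2)
  moreover have "(\<lambda>x. (g x)\<^sup>2 + ((2*e) * (g x * k x) + e\<^sup>2 * (k x)\<^sup>2)) = (\<lambda>x. (g x + e * k x)\<^sup>2)"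
    by (auto simp: power2_eq_square algebra_simps)
  ultimately have s2: "set_integrable lborel {0..1} (\<lambda>x. (g x + e * k x)\<^sup>2)" by simp
  have r: "phi x + e * eta x = (phi 0 + e * eta 0) + (LINT t:{0..x}|lborel. g t + e * k t)"
    if x: "x \<in> {0..1}" for x
  proof -
    have a: "set_integrable lborel {0..x} g" by (rule set_integrable_subset[OF g1]) (use x in auto)
    have b: "set_integrable lborel {0..x} k" by (rule set_integrable_subset[OF k1]) (use x in auto)
    have "(LINT t:{0..x}|lborel. g t + e * k t) = (LINT t:{0..x}|lborel. g t) + e * (LINT t:{0..x}|lborel. k t)"
      using set_integral_add(2)[OF a set_integrable_mult_right[OF b, of e]] by simp
    moreover have "phi x = phi 0 + (LINT t:{0..x}|lborel. g t)" using gr x by blast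
    moreover have "eta x = eta 0 + (LINT t:{0..x}|lborel. k t)" using kr x by blast
    ultimately show ?thesis by (simp add: algebra_simps)
  qed
  show ?thesis unfolding has_H1_deriv_def using s1 s2 r by blast
qed

lemma H1_min:
  assumes "s \<in> {0..1::real}"
  shows "has_H1_deriv (\<lambda>x. min x s) (\<lambda>x. indicator {..s} x)"
proof -
  have c: "set_integrable lborel {0..s} (\<lambda>_. 1::real)"
    by (rule borel_integrable_atLeastAtMost') simp
  have eq: "(\<lambda>x. indicator {0..1} x *\<^sub>R (indicator {..s} x :: real)) = (\<lambda>x. indicator {0..s} x *\<^sub>R (1::real))"
    using assms by (auto simp: indicator_def)
  have i1: "set_integrable lborel {0..1} (\<lambda>x. indicator {..s} x :: real)"
    using c unfolding set_integrable_def eq .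
  have i2: "set_integrable lborel {0..1} (\<lambda>x. (indicator {..s} x :: real)\<^sup>2)"
  proof -
    have "(\<lambda>x. (indicator {..s} x :: real)\<^sup>2) = (\<lambda>x. indicator {..s} x)"
      by (auto simp: indicator_def)
    then show ?thesis using i1 by simp
  qed
  have r: "min x s = min 0 s + (LINT t:{0..x}|lborel. (indicator {..s} t :: real))" if x: "x \<in> {0..1}" for x
  proof -
    have "set_integrable lborel {0..x} (\<lambda>x. indicator {..s} x :: real)"
      by (rule set_integrable_subset[OF i1]) (use x in auto)
    then have "(LINT t:{0..x}|lborel. (indicator {..s} t :: real)) = integral {0..x} (\<lambda>t. indicator {..s} t :: real)"
      by (rule set_borel_integral_eq_integral(2))
    also have "\<dots> = integral {0..x} (\<lambda>t. if t \<in> {..s} then 1 else 0 :: real)"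
      by (rule arg_cong[where f="integral {0..x}"]) (auto simp: indicator_def)
    also have "\<dots> = integral ({..s} \<inter> {0..x}) (\<lambda>t. 1 :: real)"
      by (rule integral_restrict_Int)
    also have "{..s} \<inter> {0..x} = {0..min x s}" by auto
    also have "integral {0..min x s} (\<lambda>t. 1 :: real) = min x s"
      using assms x by simp
    finally show ?thesis using assms by simp
  qed
  show ?thesis unfolding has_H1_deriv_def using i1 i2 r by blast
qed

lemma sin_lip: "\<bar>sin (x::real) - sin y\<bar> \<le> \<bar>x - y\<bar>"
proof -
  have "\<bar>sin x - sin y\<bar> = \<bar>2 * sin ((x - y)/2) * cos ((x + y)/2)\<bar>"
    by (simp add: sin_diff_sin)
  also have "\<dots> \<le> 2 * \<bar>sin ((x-y)/2)\<bar>" by (simp add: abs_mult mult_left_le)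
  also have "\<dots> \<le> 2 * \<bar>(x-y)/2\<bar>" using abs_sin_x_le_abs_x[of "(x-y)/2"] by linarith
  finally show ?thesis by simp
qed

lemma sin_sq_bound: "(sin (a + b))\<^sup>2 \<le> (sin a)\<^sup>2 + sin (2*a) * b + 2 * (b::real)\<^sup>2"
proof -
  define f where "f t = (sin (a + t))\<^sup>2 - (sin a)\<^sup>2 - sin (2*a) * t" for t
  have D: "DERIV f t :> (sin (2*a + 2*t) - sin (2*a))" for t
  proof -
    have "DERIV f t :> (2 * sin (a+t) * cos (a+t) - sin (2*a))"
      unfolding f_def by (auto intro!: derivative_eq_intros simp: power2_eq_square)
    moreover have "2 * sin (a+t) * cos (a+t) = sin (2*a + 2*t)"
      using sin_double[of "a+t"] by (simp add: algebra_simps)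
    ultimately show ?thesis by simp
  qed
  have B: "\<bar>sin (2*a + 2*t) - sin (2*a)\<bar> \<le> 2 * \<bar>t\<bar>" for t
    using sin_lip[of "2*a+2*t" "2*a"] by simp
  have "f b \<le> 2 * b\<^sup>2"
  proof (cases b "0::real" rule: linorder_cases)
    case less
    obtain z where z: "b < z" "z < 0" "f 0 - f b = (0 - b) * (sin (2*a + 2*z) - sin (2*a))"
      using MVT2[OF less, of f "\<lambda>t. sin (2*a + 2*t) - sin (2*a)"] D by blast
    have "f 0 = 0" by (simp add: f_def)
    have "\<bar>(0 - b) * (sin (2*a + 2*z) - sin (2*a))\<bar> \<le> \<bar>b\<bar> * (2 * \<bar>b\<bar>)"
      unfolding abs_mult using B[of z] z by (intro mult_mono) auto
    moreover have "\<bar>b\<bar> * (2 * \<bar>b\<bar>) = 2 * b\<^sup>2" by (simp add: power2_eq_square abs_mult[symmetric])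
    moreover have "f b = - ((0 - b) * (sin (2*a + 2*z) - sin (2*a)))" using z \<open>f 0 = 0\<close> by linarith
    ultimately show ?thesis by linarith
  next
    case equal then show ?thesis by (simp add: f_def)
  next
    case greater
    obtain z where z: "0 < z" "z < b" "f b - f 0 = (b - 0) * (sin (2*a + 2*z) - sin (2*a))"
      using MVT2[OF greater, of f "\<lambda>t. sin (2*a + 2*t) - sin (2*a)"] D by blast
    have "f 0 = 0" by (simp add: f_def)
    have "\<bar>(b - 0) * (sin (2*a + 2*z) - sin (2*a))\<bar> \<le> \<bar>b\<bar> * (2 * \<bar>b\<bar>)"
      unfolding abs_mult using B[of z] z by (intro mult_mono) auto
    moreover have "\<bar>b\<bar> * (2 * \<bar>b\<bar>) = 2 * b\<^sup>2" by (simp add: power2_eq_square abs_mult[symmetric])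
    moreover have "f b = (b - 0) * (sin (2*a + 2*z) - sin (2*a))" using z \<open>f 0 = 0\<close> by linarith
    ultimately show ?thesis by linarith
  qed
  then show ?thesis by (simp add: f_def)
qed




lemma quad_zero:
  fixes L K :: real
  assumes "\<And>e. 0 \<le> e * L + e\<^sup>2 * K"
  shows "L = 0"
proof (rule ccontr)
  assume L: "L \<noteq> 0"
  define M where "M = \<bar>K\<bar> + 1"
  have M: "M > 0" "\<bar>K\<bar> < M" unfolding M_def by auto
  define e where "e = - L / M"
  have "e * L + e\<^sup>2 * K \<le> e * L + e\<^sup>2 * \<bar>K\<bar>"
    by (intro add_left_mono mult_left_mono) auto
  also have "\<dots> = - L\<^sup>2 / M + L\<^sup>2 * \<bar>K\<bar> / M\<^sup>2"
    unfolding e_def by (simp add: power2_eq_square field_simps)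
  also have "\<dots> = L\<^sup>2 / M\<^sup>2 * (\<bar>K\<bar> - M)"
    using M by (simp add: power2_eq_square field_simps)
  also have "\<dots> < 0"
    using L M by (intro mult_pos_neg) auto
  finally show False using assms[of e] by linarith
qed

lemma J_classI: "has_H1_deriv psi h \<Longrightarrow> psi 0 = 0 \<Longrightarrow> psi \<in> J_class"
  unfolding J_class_def H1_def by blast

lemma EL:
  assumes min: "is_minimizer \<beta> \<kappa> phi" and hg: "has_H1_deriv phi g" and z: "phi 0 = 0"
    and s: "s \<in> {0..1}" and b: "\<beta> \<noteq> 0"
  shows "phi s = 2 * \<kappa> * s - 1/(2*\<beta>\<^sup>2) * integral {0..1} (\<lambda>x. sin (2 * phi x) * min x s)"
proof -
  define eta where "eta = (\<lambda>x::real. min x s)"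
  define k where "k = (\<lambda>x. indicator {..s} x :: real)"
  have hk: "has_H1_deriv eta k" unfolding eta_def k_def by (rule H1_min[OF s])
  note Bg = H1_basic[OF hg]
  note Bk = H1_basic[OF hk]
  have ce: "continuous_on {0..1} eta" by (rule Bk(4))
  have cp: "continuous_on {0..1} phi" by (rule Bg(4))
  have e0: "eta 0 = 0" "eta 1 = s" using s by (auto simp: eta_def)
  have gk_int: "(\<lambda>x. g x * k x) integrable_on {0..1}"
    using hg hk unfolding has_H1_deriv_def
    by (intro set_borel_integral_eq_integral(1) set_integrable_prod) blast+
  have igk: "integral {0..1} (\<lambda>x. g x * k x) = phi s"
  proof -
    have "integral {0..1} (\<lambda>x. g x * k x) = integral {0..1} (\<lambda>x. if x \<in> {..s} then g x else 0)"
      by (rule arg_cong[where f="integral {0..1}"]) (auto simp: k_def indicator_def)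
    also have "\<dots> = integral ({..s} \<inter> {0..1}) g" by (rule integral_restrict_Int)
    also have "{..s} \<inter> {0..1} = {0..s}" using s by auto
    also have "integral {0..s} g = phi s" using Bg(3)[OF s] z by simp
    finally show ?thesis .
  qed
  have ikk: "integral {0..1} (\<lambda>x. (k x)\<^sup>2) = s"
  proof -
    have "integral {0..1} (\<lambda>x. (k x)\<^sup>2) = integral {0..1} (\<lambda>x. if x \<in> {..s} then 1 else 0::real)"
      by (rule arg_cong[where f="integral {0..1}"]) (auto simp: k_def indicator_def)
    also have "\<dots> = integral ({..s} \<inter> {0..1}) (\<lambda>x. 1::real)" by (rule integral_restrict_Int)
    also have "{..s} \<inter> {0..1} = {0..s}" using s by auto
    finally show ?thesis using s by simp
  qed
  define Ig where "Ig = integral {0..1} (\<lambda>x. (g x)\<^sup>2)"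
  define Is where "Is = integral {0..1} (\<lambda>x. (sin (phi x))\<^sup>2)"
  define Q where "Q = integral {0..1} (\<lambda>x. sin (2 * phi x) * eta x)"
  define N where "N = integral {0..1} (\<lambda>x. (eta x)\<^sup>2)"
  define L where "L = phi s / 4 + Q / (8*\<beta>\<^sup>2) - \<kappa> * s / 2"
  define K where "K = (s + 2 * N / \<beta>\<^sup>2) / 8"
  have Fphi: "F_energy \<beta> \<kappa> phi g = 1/8 * (Ig + Is / \<beta>\<^sup>2) - \<kappa>/2 * phi 1"
    using F_eq[OF hg] z unfolding Ig_def Is_def by simp
  have main: "0 \<le> e * L + e\<^sup>2 * K" for e
  proof -
    have hpsi: "has_H1_deriv (\<lambda>x. phi x + e * eta x) (\<lambda>x. g x + e * k x)"
      by (rule H1_lin[OF hg hk])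
    have J: "(\<lambda>x. phi x + e * eta x) \<in> J_class" using J_classI[OF hpsi] z e0 by simp
    have le: "F_energy \<beta> \<kappa> phi g \<le> F_energy \<beta> \<kappa> (\<lambda>x. phi x + e * eta x) (\<lambda>x. g x + e * k x)"
      using min hg J hpsi unfolding is_minimizer_def by blast
    have sq: "integral {0..1} (\<lambda>x. (g x + e * k x)\<^sup>2) = Ig + 2 * e * phi s + e\<^sup>2 * s"
    proof -
      have "integral {0..1} (\<lambda>x. (g x + e * k x)\<^sup>2)
          = integral {0..1} (\<lambda>x. (g x)\<^sup>2 + ((2*e) * (g x * k x) + e\<^sup>2 * (k x)\<^sup>2))"
        by (rule arg_cong[where f="integral {0..1}"]) (auto simp: power2_eq_square algebra_simps)
      also have "\<dots> = Ig + ((2*e) * integral {0..1} (\<lambda>x. g x * k x) + e\<^sup>2 * integral {0..1} (\<lambda>x. (k x)\<^sup>2))"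
      proof -
        have i1: "(\<lambda>x. (2*e) * (g x * k x)) integrable_on {0..1}"
          using integrable_on_cmult_left[OF gk_int, of "2*e"] by simp
        have i2: "(\<lambda>x. e\<^sup>2 * (k x)\<^sup>2) integrable_on {0..1}"
          using integrable_on_cmult_left[OF Bk(2), of "e\<^sup>2"] by simp
        show ?thesis unfolding Ig_def
          using integral_add[OF Bg(2) integrable_add[OF i1 i2]] integral_add[OF i1 i2] by simp
      qed
      finally show ?thesis using igk ikk by simp
    qed
    have si: "integral {0..1} (\<lambda>x. (sin (phi x + e * eta x))\<^sup>2) \<le> Is + e * Q + 2 * e\<^sup>2 * N"
    proof -
      have "integral {0..1} (\<lambda>x. (sin (phi x + e * eta x))\<^sup>2)
           \<le> integral {0..1} (\<lambda>x. (sin (phi x))\<^sup>2 + e * (sin (2 * phi x) * eta x) + 2 * e\<^sup>2 * (eta x)\<^sup>2)"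
      proof (rule integral_le)
        show "(\<lambda>x. (sin (phi x + e * eta x))\<^sup>2) integrable_on {0..1}"
          by (intro integrable_continuous_interval continuous_intros cp ce)
        show "(\<lambda>x. (sin (phi x))\<^sup>2 + e * (sin (2 * phi x) * eta x) + 2 * e\<^sup>2 * (eta x)\<^sup>2) integrable_on {0..1}"
          by (intro integrable_continuous_interval continuous_intros cp ce)
        show "(sin (phi x + e * eta x))\<^sup>2 \<le> (sin (phi x))\<^sup>2 + e * (sin (2 * phi x) * eta x) + 2 * e\<^sup>2 * (eta x)\<^sup>2" for x
          using sin_sq_bound[of "phi x" "e * eta x"] by (simp add: power2_eq_square algebra_simps)
      qed
      also have "\<dots> = Is + e * Q + 2 * e\<^sup>2 * N"
        unfolding Is_def Q_def N_def
        by (subst integral_add, (intro integrable_continuous_interval continuous_intros cp ce)+,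
            subst integral_add, (intro integrable_continuous_interval continuous_intros cp ce)+, simp)
      finally show ?thesis .
    qed
    have Fpsi: "F_energy \<beta> \<kappa> (\<lambda>x. phi x + e * eta x) (\<lambda>x. g x + e * k x)
        \<le> 1/8 * ((Ig + 2 * e * phi s + e\<^sup>2 * s) + (Is + e * Q + 2 * e\<^sup>2 * N) / \<beta>\<^sup>2) - \<kappa>/2 * (phi 1 + e * s)"
    proof -
      have "F_energy \<beta> \<kappa> (\<lambda>x. phi x + e * eta x) (\<lambda>x. g x + e * k x)
         = 1/8 * ((Ig + 2 * e * phi s + e\<^sup>2 * s) + integral {0..1} (\<lambda>x. (sin (phi x + e * eta x))\<^sup>2) / \<beta>\<^sup>2) - \<kappa>/2 * (phi 1 + e * s)"
        using F_eq[OF hpsi] sq z e0 by (simp add: algebra_simps)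
      moreover have "integral {0..1} (\<lambda>x. (sin (phi x + e * eta x))\<^sup>2) / \<beta>\<^sup>2 \<le> (Is + e * Q + 2 * e\<^sup>2 * N) / \<beta>\<^sup>2"
        using si by (intro divide_right_mono) auto
      moreover have gen: "\<And>F P X Y c::real. F = 1/8*(P+X) - c \<Longrightarrow> X \<le> Y \<Longrightarrow> F \<le> 1/8*(P+Y) - c"
        by (simp add: field_simps)
      ultimately show ?thesis by blast
    qed
    have "1/8 * ((Ig + 2 * e * phi s + e\<^sup>2 * s) + (Is + e * Q + 2 * e\<^sup>2 * N) / \<beta>\<^sup>2) - \<kappa>/2 * (phi 1 + e * s)
          - (1/8 * (Ig + Is / \<beta>\<^sup>2) - \<kappa>/2 * phi 1) = e * L + e\<^sup>2 * K"
      unfolding L_def K_def using b by (simp add: field_simps power2_eq_square)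
    then show ?thesis using le Fpsi Fphi by linarith
  qed
  have "L = 0" by (rule quad_zero[OF main])
  then have "phi s = 2 * \<kappa> * s - Q / (2*\<beta>\<^sup>2)" unfolding L_def using b by (simp add: field_simps)
  then show ?thesis unfolding Q_def eta_def by simp
qed




lemma regularity:
  fixes phi :: "real \<Rightarrow> real"
  assumes cp: "continuous_on {0..1} phi" and b: "\<beta> \<noteq> 0"
    and EL: "\<And>s. s \<in> {0..1} \<Longrightarrow> phi s = 2 * \<kappa> * s - 1/(2*\<beta>\<^sup>2) * integral {0..1} (\<lambda>x. sin (2 * phi x) * min x s)"
  defines "P \<equiv> \<lambda>s. 2 * \<kappa> - 1/(2*\<beta>\<^sup>2) * (integral {0..1} (\<lambda>x. sin (2 * phi x)) - integral {0..s} (\<lambda>x. sin (2 * phi x)))"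
  shows "\<And>s. s \<in> {0..1} \<Longrightarrow> (phi has_real_derivative P s) (at s within {0..1})"
    "\<And>s. s \<in> {0..1} \<Longrightarrow> (P has_real_derivative sin (2 * phi s) / (2*\<beta>\<^sup>2)) (at s within {0..1})"
    "P 1 = 2 * \<kappa>"
    "continuous_on {0..1} P"
proof -
  define q where "q = (\<lambda>x. sin (2 * phi x))"
  define I1 where "I1 = integral {0..1} q"
  define A where "A = (\<lambda>s. integral {0..s} (\<lambda>x. x * q x))"
  define B where "B = (\<lambda>s. integral {0..s} q)"
  have cq: "continuous_on {0..1} q" unfolding q_def by (intro continuous_intros cp)
  have Pq: "P = (\<lambda>s. 2 * \<kappa> - 1/(2*\<beta>\<^sup>2) * (I1 - B s))"
    unfolding P_def I1_def B_def q_def by simp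
  have dec: "integral {0..1} (\<lambda>x. q x * min x s) = A s + s * (I1 - B s)" if s: "s \<in> {0..1}" for s
  proof -
    have int: "(\<lambda>x. q x * min x s) integrable_on {0..1}"
      by (intro integrable_continuous_interval continuous_intros cq)
    have "integral {0..1} (\<lambda>x. q x * min x s) = integral {0..s} (\<lambda>x. q x * min x s) + integral {s..1} (\<lambda>x. q x * min x s)"
      using Henstock_Kurzweil_Integration.integral_combine[where a=0 and c=s and b=1, OF _ _ int] s by simp
    also have "integral {0..s} (\<lambda>x. q x * min x s) = A s"
      unfolding A_def by (rule integral_cong) (auto simp: min_def)
    also have "integral {s..1} (\<lambda>x. q x * min x s) = integral {s..1} (\<lambda>x. s * q x)"
      by (rule integral_cong) (auto simp: min_def)
    also have "\<dots> = s * integral {s..1} q" by simp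
    also have "integral {s..1} q = I1 - B s"
    proof -
      have "integral {0..s} q + integral {s..1} q = integral {0..1} q"
        using Henstock_Kurzweil_Integration.integral_combine[where a=0 and c=s and b=1 and f=q] s integrable_continuous_interval[OF cq] by simp
      then show ?thesis unfolding I1_def B_def by simp
    qed
    finally show ?thesis .
  qed
  have phiR: "phi s = 2 * \<kappa> * s - 1/(2*\<beta>\<^sup>2) * (A s + s * (I1 - B s))" if "s \<in> {0..1}" for s
    using EL[OF that] dec[OF that] unfolding q_def by simp
  have dA: "(A has_real_derivative s * q s) (at s within {0..1})" if "s \<in> {0..1}" for s
    unfolding A_def by (rule integral_has_real_derivative) (intro continuous_intros cq, rule that)
  have dB: "(B has_real_derivative q s) (at s within {0..1})" if "s \<in> {0..1}" for s
    unfolding B_def by (rule integral_has_real_derivative[OF cq that])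
  show d1: "(phi has_real_derivative P s) (at s within {0..1})" if s: "s \<in> {0..1}" for s
  proof -
    have "((\<lambda>s. 2 * \<kappa> * s - 1/(2*\<beta>\<^sup>2) * (A s + s * (I1 - B s))) has_real_derivative
          2 * \<kappa> * 1 - 1/(2*\<beta>\<^sup>2) * (s * q s + (s * (0 - q s) + 1 * (I1 - B s)))) (at s within {0..1})"
      by (intro DERIV_diff DERIV_cmult DERIV_add DERIV_mult' DERIV_ident DERIV_const dA[OF s] dB[OF s])
    moreover have "2 * \<kappa> * 1 - 1/(2*\<beta>\<^sup>2) * (s * q s + (s * (0 - q s) + 1 * (I1 - B s))) = P s"
      unfolding Pq by (simp add: algebra_simps)
    ultimately have "((\<lambda>s. 2 * \<kappa> * s - 1/(2*\<beta>\<^sup>2) * (A s + s * (I1 - B s))) has_real_derivative P s) (at s within {0..1})"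
      by simp
    then show ?thesis
      by (rule has_field_derivative_transform_within[where d=1]) (use s phiR in auto)
  qed
  show "(P has_real_derivative sin (2 * phi s) / (2*\<beta>\<^sup>2)) (at s within {0..1})" if s: "s \<in> {0..1}" for s
  proof -
    have "(P has_real_derivative 0 - 1/(2*\<beta>\<^sup>2) * (0 - q s)) (at s within {0..1})"
      unfolding Pq by (intro DERIV_diff DERIV_cmult DERIV_const dB[OF s])
    then show ?thesis unfolding q_def by simp
  qed
  show "P 1 = 2 * \<kappa>" unfolding Pq I1_def B_def by simp
  show "continuous_on {0..1} P"
    unfolding Pq B_def by (intro continuous_intros indefinite_integral_continuous_1 integrable_continuous_interval cq)
qed

lemma first_integral:
  fixes phi P :: "real \<Rightarrow> real"
  assumes d1: "\<And>s. s \<in> {0..1} \<Longrightarrow> (phi has_real_derivative P s) (at s within {0..1})"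
    and d2: "\<And>s. s \<in> {0..1} \<Longrightarrow> (P has_real_derivative sin (2 * phi s) / (2*\<beta>\<^sup>2)) (at s within {0..1})"
    and b: "\<beta> \<noteq> 0"
  shows "\<exists>C. \<forall>s\<in>{0..1}. (P s)\<^sup>2 - (sin (phi s))\<^sup>2 / \<beta>\<^sup>2 = C"
proof -
  have "\<exists>C. \<forall>s\<in>{0..1}. (\<lambda>s. (P s)\<^sup>2 - (sin (phi s))\<^sup>2 / \<beta>\<^sup>2) s = C"
  proof (rule has_field_derivative_zero_constant)
    show "convex {0..1::real}" by simp
    fix s :: real assume s: "s \<in> {0..1}"
    have "((\<lambda>s. (P s)\<^sup>2 - (sin (phi s))\<^sup>2 / \<beta>\<^sup>2) has_real_derivative
       2 * P s * (sin (2 * phi s) / (2*\<beta>\<^sup>2)) - 2 * sin (phi s) * (cos (phi s) * P s) / \<beta>\<^sup>2) (at s within {0..1})"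
      using d1[OF s] d2[OF s] b by (auto intro!: derivative_eq_intros simp: power2_eq_square)
    moreover have "2 * P s * (sin (2 * phi s) / (2*\<beta>\<^sup>2)) - 2 * sin (phi s) * (cos (phi s) * P s) / \<beta>\<^sup>2 = 0"
      using b sin_double[of "phi s"] by (simp add: field_simps)
    ultimately show "((\<lambda>s. (P s)\<^sup>2 - (sin (phi s))\<^sup>2 / \<beta>\<^sup>2) has_field_derivative 0) (at s within {0..1})"
      by metis
  qed
  then show ?thesis by simp
qed




lemma cont_from_deriv:
  assumes "\<And>x. x \<in> {p..q} \<Longrightarrow> (f has_real_derivative f' x) (at x within {p..q})"
  shows "continuous_on {p..q} f"
  unfolding continuous_on_eq_continuous_within using assms DERIV_continuous by blast

lemma incr_within:
  fixes f f' :: "real \<Rightarrow> real"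
  assumes ab: "a \<le> b" "p \<le> a" "b \<le> q"
    and d: "\<And>x. x \<in> {p..q} \<Longrightarrow> (f has_real_derivative f' x) (at x within {p..q})"
    and nn: "\<And>x. x \<in> {a..b} \<Longrightarrow> f' x \<ge> 0"
  shows "f a \<le> f b"
proof (rule DERIV_nonneg_imp_increasing_open[OF ab(1)])
  fix x assume x: "a < x" "x < b"
  then have "x \<in> interior {p..q}" using ab by auto
  then have "(f has_real_derivative f' x) (at x)"
    using d[of x] x ab at_within_interior[of x "{p..q}"] by auto
  then show "\<exists>y. DERIV f x :> y \<and> y \<ge> 0" using nn[of x] x by auto
next
  show "continuous_on {a..b} f"
    using cont_from_deriv[OF d] by (rule continuous_on_subset) (use ab in auto)
qed

lemma incr_within_strict:
  fixes f f' :: "real \<Rightarrow> real"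
  assumes ab: "a < b" "p \<le> a" "b \<le> q"
    and d: "\<And>x. x \<in> {p..q} \<Longrightarrow> (f has_real_derivative f' x) (at x within {p..q})"
    and nn: "\<And>x. x \<in> {a..b} \<Longrightarrow> f' x > 0"
  shows "f a < f b"
proof (rule DERIV_pos_imp_increasing_open[OF ab(1)])
  fix x assume x: "a < x" "x < b"
  then have "x \<in> interior {p..q}" using ab by auto
  then have "(f has_real_derivative f' x) (at x)"
    using d[of x] x ab at_within_interior[of x "{p..q}"] by auto
  then show "\<exists>y. DERIV f x :> y \<and> y > 0" using nn[of x] x by auto
next
  show "continuous_on {a..b} f"
    using cont_from_deriv[OF d] by (rule continuous_on_subset) (use ab in auto)
qed

lemma gronwall_unique:
  fixes y1 y2 D1 D2 :: "real \<Rightarrow> real"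
  assumes pa: "p \<le> a" "a \<le> q"
    and d1: "\<And>x. x \<in> {p..q} \<Longrightarrow> (y1 has_real_derivative D1 x) (at x within {p..q})"
    and d2: "\<And>x. x \<in> {p..q} \<Longrightarrow> (y2 has_real_derivative D2 x) (at x within {p..q})"
    and lip: "\<And>x. x \<in> {p..q} \<Longrightarrow> \<bar>D1 x - D2 x\<bar> \<le> L * \<bar>y1 x - y2 x\<bar>"
    and init: "y1 a = y2 a"
  shows "\<forall>x\<in>{p..q}. y1 x = y2 x"
proof
  fix x assume x: "x \<in> {p..q}"
  define w where "w = (\<lambda>x. y1 x - y2 x)"
  have key: "w x * (D1 x - D2 x) \<le> L * (w x)\<^sup>2" "- (L * (w x)\<^sup>2) \<le> w x * (D1 x - D2 x)"
    if "x \<in> {p..q}" for x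
  proof -
    have "\<bar>w x * (D1 x - D2 x)\<bar> \<le> \<bar>w x\<bar> * (L * \<bar>w x\<bar>)"
      unfolding abs_mult w_def using lip[OF that] by (intro mult_left_mono) auto
    also have "\<dots> = L * (w x)\<^sup>2" by (simp add: power2_eq_square abs_mult[symmetric])
    finally show "w x * (D1 x - D2 x) \<le> L * (w x)\<^sup>2" "- (L * (w x)\<^sup>2) \<le> w x * (D1 x - D2 x)"
      by linarith+
  qed
  have dw: "(w has_real_derivative D1 x - D2 x) (at x within {p..q})" if "x \<in> {p..q}" for x
    unfolding w_def using d1[OF that] d2[OF that] by (rule DERIV_diff)
  show "y1 x = y2 x"
  proof (cases "a \<le> x")
    case True
    define u where "u = (\<lambda>x. - ((w x)\<^sup>2 * exp (- 2 * L * x)))"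
    have du: "(u has_real_derivative - (2 * w x * (D1 x - D2 x) * exp (- 2 * L * x) + (w x)\<^sup>2 * (exp (- 2 * L * x) * (- 2 * L))))
          (at x within {p..q})" if "x \<in> {p..q}" for x
      unfolding u_def using dw[OF that]
      by (auto intro!: derivative_eq_intros simp: power2_eq_square algebra_simps)
    have "u a \<le> u x"
    proof (rule incr_within[OF True pa(1) _ du])
      show "x \<le> q" using x by auto
      fix t assume t: "t \<in> {a..x}"
      then have tp: "t \<in> {p..q}" using pa x by auto
      have "2 * w t * (D1 t - D2 t) * exp (- 2 * L * t) \<le> 2 * (L * (w t)\<^sup>2) * exp (- 2 * L * t)"
        using key(1)[OF tp] by (intro mult_right_mono) auto
      then show "0 \<le> - (2 * w t * (D1 t - D2 t) * exp (- 2 * L * t) + (w t)\<^sup>2 * (exp (- 2 * L * t) * (- 2 * L)))"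
        by (simp add: algebra_simps)
    qed auto
    moreover have "u a = 0" unfolding u_def w_def using init by simp
    ultimately have "(w x)\<^sup>2 * exp (- 2 * L * x) \<le> 0" unfolding u_def by simp
    then have "(w x)\<^sup>2 \<le> 0" by (simp add: mult_le_0_iff)
    then show ?thesis unfolding w_def by simp
  next
    case False
    define v where "v = (\<lambda>x. (w x)\<^sup>2 * exp (2 * L * x))"
    have dv: "(v has_real_derivative (2 * w x * (D1 x - D2 x) * exp (2 * L * x) + (w x)\<^sup>2 * (exp (2 * L * x) * (2 * L))))
          (at x within {p..q})" if "x \<in> {p..q}" for x
      unfolding v_def using dw[OF that]
      by (auto intro!: derivative_eq_intros simp: power2_eq_square algebra_simps)
    have "v x \<le> v a"
    proof (rule incr_within[of x a p q, OF _ _ _ dv])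
      show "x \<le> a" using False by simp
      show "p \<le> x" using x by auto
      show "a \<le> q" using pa by simp
      fix t assume t: "t \<in> {x..a}"
      then have tp: "t \<in> {p..q}" using pa x by auto
      have "2 * (- (L * (w t)\<^sup>2)) * exp (2 * L * t) \<le> 2 * w t * (D1 t - D2 t) * exp (2 * L * t)"
        using key(2)[OF tp] by (intro mult_right_mono) auto
      then show "0 \<le> 2 * w t * (D1 t - D2 t) * exp (2 * L * t) + (w t)\<^sup>2 * (exp (2 * L * t) * (2 * L))"
        by (simp add: algebra_simps)
    qed auto
    moreover have "v a = 0" unfolding v_def w_def using init by simp
    ultimately have "(w x)\<^sup>2 * exp (2 * L * x) \<le> 0" unfolding v_def by simp
    then have "(w x)\<^sup>2 \<le> 0" by (simp add: mult_le_0_iff)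
    then show ?thesis unfolding w_def by simp
  qed
qed




lemma sin_sq_diff: "(sin (a::real))\<^sup>2 - (sin b)\<^sup>2 = sin (a + b) * sin (a - b)"
proof -
  have e1: "cos (2*a) = 1 - 2*(sin a)\<^sup>2" by (rule cos_double_sin)
  have e2: "cos (2*b) = 1 - 2*(sin b)\<^sup>2" by (rule cos_double_sin)
  have "(sin a)\<^sup>2 - (sin b)\<^sup>2 = (cos (2*b) - cos (2*a))/2" using e1 e2 by simp
  also have "\<dots> = (cos ((a+b) - (a-b)) - cos ((a+b) + (a-b)))/2"
  proof -
    have "2*b = (a+b) - (a-b)" "2*a = (a+b) + (a-b)" by simp_all
    then show ?thesis by metis
  qed
  also have "\<dots> = sin (a + b) * sin (a - b)"
    by (simp only: cos_add cos_diff) simp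
  finally show ?thesis .
qed

lemma sin_sq_lip: "\<bar>(sin (a::real))\<^sup>2 - (sin b)\<^sup>2\<bar> \<le> \<bar>a - b\<bar>"
proof -
  have "\<bar>(sin a)\<^sup>2 - (sin b)\<^sup>2\<bar> = \<bar>sin (a + b)\<bar> * \<bar>sin (a - b)\<bar>"
    by (simp add: sin_sq_diff abs_mult)
  also have "\<dots> \<le> 1 * \<bar>a - b\<bar>"
    by (intro mult_mono abs_sin_le_one abs_sin_x_le_abs_x) auto
  finally show ?thesis by simp
qed

lemma jordan: assumes "0 \<le> t" "t \<le> pi/2" shows "2 * t / pi \<le> sin t"
proof (rule ccontr)
  assume neg: "\<not> 2 * t / pi \<le> sin t"
  define f where "f x = sin x - 2 * x / pi" for x
  have ft: "f t < 0" using neg by (simp add: f_def)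
  have D: "DERIV f x :> cos x - 2 / pi" for x
    unfolding f_def by (auto intro!: derivative_eq_intros)
  have t0: "0 < t" using ft assms by (cases "t = 0") (auto simp: f_def)
  have t1: "t < pi/2" using ft assms by (cases "t = pi/2") (auto simp: f_def)
  obtain z1 where z1: "0 < z1" "z1 < t" "f t - f 0 = (t - 0) * (cos z1 - 2/pi)"
    using MVT2[OF t0, of f "\<lambda>x. cos x - 2/pi"] D by blast
  obtain z2 where z2: "t < z2" "z2 < pi/2" "f (pi/2) - f t = (pi/2 - t) * (cos z2 - 2/pi)"
    using MVT2[OF t1, of f "\<lambda>x. cos x - 2/pi"] D by blast
  have "f 0 = 0" "f (pi/2) = 0" by (auto simp: f_def)
  have n1: "cos z1 - 2/pi < 0"
  proof -
    have "t * (cos z1 - 2/pi) < 0" using z1 ft \<open>f 0 = 0\<close> by simp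
    then show ?thesis using t0 by (simp add: mult_less_0_iff)
  qed
  have p2: "cos z2 - 2/pi > 0"
  proof -
    have "(pi/2 - t) * (cos z2 - 2/pi) > 0" using z2 ft \<open>f (pi/2) = 0\<close> by simp
    then show ?thesis using t1 by (simp add: zero_less_mult_iff)
  qed
  have "cos z2 \<le> cos z1" using z1 z2 t1 by (subst cos_mono_le_eq) auto
  then show False using n1 p2 by simp
qed

lemma cos_chord: assumes "pi/2 \<le> th" "th \<le> pi" shows "cos th \<le> 1 - 2 * th / pi"
proof -
  have "2 * (th - pi/2) / pi \<le> sin (th - pi/2)" by (rule jordan) (use assms in auto)
  moreover have "sin (th - pi/2) = - cos th" by (simp add: sin_diff)
  moreover have "2 * (th - pi/2) / pi = 2 * th / pi - 1" by (simp add: field_simps)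
  ultimately show ?thesis by simp
qed

lemma sin_2arctan: "sin (2 * arctan t) = 2 * t / (1 + t\<^sup>2)"
proof -
  have p: "0 < 1 + t\<^sup>2" by (simp add: add_pos_nonneg)
  have "sin (2 * arctan t) = 2 * (t / sqrt (1 + t\<^sup>2)) * (1 / sqrt (1 + t\<^sup>2))"
    by (simp add: sin_double sin_arctan cos_arctan)
  also have "\<dots> = 2 * t / (sqrt (1 + t\<^sup>2) * sqrt (1 + t\<^sup>2))" by simp
  also have "sqrt (1 + t\<^sup>2) * sqrt (1 + t\<^sup>2) = 1 + t\<^sup>2" using p by simp
  finally show ?thesis .
qed

lemma kink_deriv:
  assumes "\<beta> > 0"
  shows "((\<lambda>x. 2 * arctan (exp ((x - c) / \<beta>))) has_real_derivative sin (2 * arctan (exp ((x - c) / \<beta>))) / \<beta>) (at x)"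
proof -
  define e where "e = exp ((x - c) / \<beta>)"
  have "((\<lambda>x. 2 * arctan (exp ((x - c) / \<beta>))) has_real_derivative 2 * (inverse (1 + e\<^sup>2) * (e * (1 / \<beta>)))) (at x)"
    unfolding e_def using assms
    by (auto intro!: derivative_eq_intros DERIV_arctan[THEN DERIV_chain2])
  moreover have "2 * (inverse (1 + e\<^sup>2) * (e * (1 / \<beta>))) = sin (2 * arctan e) / \<beta>"
    unfolding sin_2arctan using assms by (simp add: field_simps)
  ultimately show ?thesis unfolding e_def by metis
qed

lemma arctan_exp_end: "2 * arctan (exp M) = pi - 2 * arctan (exp (- M))"
proof -
  have "arctan (1 / exp M) = sgn (exp M) * pi/2 - arctan (exp M)" by (rule Transcendental.arctan_inverse) simp
  then show ?thesis by (simp add: exp_minus inverse_eq_divide)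
qed

lemma exp8: "81 \<le> exp (8::real)"
proof -
  have "3 \<le> exp (2::real)" using exp_ge_add_one_self[of 2] by simp
  then have "3 ^ 4 \<le> exp (2::real) ^ 4" by (intro power_mono) auto
  also have "exp (2::real) ^ 4 = exp 8" by (simp add: exp_of_nat_mult[symmetric])
  finally show ?thesis by simp
qed

lemma eps_bound: "2 * arctan (exp (- 8)) \<le> 2 / (81::real)"
proof -
  have "arctan (exp (- 8)) \<le> exp (- 8::real)" by (rule arctan_le_self) simp
  also have "exp (- 8::real) = 1 / exp 8" by (simp add: exp_minus inverse_eq_divide)
  also have "\<dots> \<le> 1 / 81" using exp8 by (intro divide_left_mono) auto
  finally show ?thesis by simp
qed




lemma set_integrable_bounded_meas:
  fixes f :: "real \<Rightarrow> real"
  assumes m: "f \<in> borel_measurable lborel" and b: "\<And>x. x \<in> {0..1} \<Longrightarrow> \<bar>f x\<bar> \<le> B"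
  shows "set_integrable lborel {0..1} f"
proof (rule set_integrable_bound[where f="\<lambda>_::real. B"])
  show "set_integrable lborel {0..1} (\<lambda>_::real. B)" using borel_integrable_atLeastAtMost'[OF continuous_on_const] .
  show "set_borel_measurable lborel {0..1} f"
    unfolding set_borel_measurable_def using m by measurable
  show "AE x in lborel. x \<in> {0..1} \<longrightarrow> norm (f x) \<le> norm B"
    using b by (auto intro!: AE_I2) (smt (verit) real_norm_def)
qed


locale comp =
  fixes \<beta> :: real
  assumes bpos: "0 < \<beta>" and bsmall: "17 * \<beta> \<le> 1"
begin

definition "c = 8 * \<beta>"
definition "eps = 2 * arctan (exp (- 8))"
definition "kk x = 2 * arctan (exp ((x - c) / \<beta>))"
definition "s0 = (1/4::real)"
definition "psi1 x = kk x + eps * (x / c - 1)"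
definition "h1 x = sin (kk x) / \<beta> + eps / c"
definition "psi3 x = pi + s0 * (x - (1 - \<beta>)) / \<beta>"
definition "psi x = (if x \<le> 2*c then psi1 x else if x \<le> 1 - \<beta> then pi else psi3 x)"
definition "h x = (if x \<le> 2*c then h1 x else if x \<le> 1 - \<beta> then 0 else s0 / \<beta>)"

lemma cpos: "0 < c" and c2: "2 * c \<le> 1 - \<beta>" and cb: "c = 8 * \<beta>"
  using bpos bsmall by (auto simp: c_def)

lemma kk0: "kk 0 = eps" and kk2c: "kk (2*c) = pi - eps"
proof -
  have "(0 - c) / \<beta> = - 8" using bpos by (simp add: c_def)
  then show "kk 0 = eps" by (simp add: kk_def eps_def)
  have "(2*c - c) / \<beta> = 8" using bpos by (simp add: c_def)
  then show "kk (2*c) = pi - eps" unfolding kk_def eps_def using arctan_exp_end[of 8] by simp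
qed

lemma psi1_0: "psi1 0 = 0" and psi1_2c: "psi1 (2*c) = pi"
  using kk0 kk2c cpos by (auto simp: psi1_def)

lemma psi3_end: "psi3 (1 - \<beta>) = pi" "psi3 1 = pi + s0"
  using bpos by (auto simp: psi3_def)

lemma psi_0: "psi 0 = 0" and psi_1: "psi 1 = pi + 1/4"
  using psi1_0 cpos c2 bpos psi3_end by (auto simp: psi_def s0_def)

lemma d_psi1: "(psi1 has_real_derivative h1 x) (at x)"
proof -
  have "((\<lambda>x. kk x + eps * (x / c - 1)) has_real_derivative sin (kk x) / \<beta> + eps * (1 / c - 0)) (at x)"
    unfolding kk_def by (intro DERIV_add DERIV_cmult DERIV_diff DERIV_const kink_deriv[OF bpos]
      DERIV_cdivide[where f="\<lambda>x. x", OF DERIV_ident, simplified] [[simproc del: divide_cancel_factor]])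
  then show ?thesis unfolding psi1_def[abs_def] h1_def by simp
qed

lemma d_psi3: "(psi3 has_real_derivative s0 / \<beta>) (at x)"
  unfolding psi3_def[abs_def] using bpos by (auto intro!: derivative_eq_intros)

lemma cont_psi: "continuous_on UNIV psi"
proof -
  have c1: "continuous_on UNIV psi1" using d_psi1
    by (metis DERIV_isCont continuous_at_imp_continuous_on)
  have c3: "continuous_on UNIV psi3" using d_psi3
    by (metis DERIV_isCont continuous_at_imp_continuous_on)
  have inner: "continuous_on UNIV (\<lambda>x. if x \<le> 1 - \<beta> then pi else psi3 x)"
    by (rule continuous_on_cases_le[where h="\<lambda>x. x", simplified])
       (auto intro: continuous_on_subset[OF c3] simp: psi3_end)
  show ?thesis unfolding psi_def[abs_def]
    by (rule continuous_on_cases_le[where h="\<lambda>x. x", simplified])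
       (auto intro: continuous_on_subset[OF c1] continuous_on_subset[OF inner] simp: psi1_2c c2)
qed

lemma d_psi: assumes "y \<noteq> 2*c" "y \<noteq> 1 - \<beta>" shows "(psi has_real_derivative h y) (at y)"
proof (cases "y < 2*c")
  case True
  have "(psi has_real_derivative h1 y) (at y)"
    by (rule has_field_derivative_transform_within_open[OF d_psi1, of "{..<2*c}"])
       (use True in \<open>auto simp: psi_def\<close>)
  then show ?thesis using True by (simp add: h_def)
next
  case F1: False
  show ?thesis
  proof (cases "y < 1 - \<beta>")
    case True
    have "((\<lambda>_. pi) has_real_derivative 0) (at y)" by simp
    then have "(psi has_real_derivative 0) (at y)"
      by (rule has_field_derivative_transform_within_open[of _ _ _ "{2*c<..<1-\<beta>}"])
         (use True F1 assms in \<open>auto simp: psi_def\<close>)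
    then show ?thesis using True F1 assms by (simp add: h_def)
  next
    case False
    have "(psi has_real_derivative s0 / \<beta>) (at y)"
      by (rule has_field_derivative_transform_within_open[OF d_psi3, of "{1-\<beta><..}"])
         (use False F1 assms c2 in \<open>auto simp: psi_def\<close>)
    then show ?thesis using False F1 assms c2 by (simp add: h_def)
  qed
qed

lemma h_meas: "h \<in> borel_measurable lborel"
proof -
  have "h1 \<in> borel_measurable lborel" using d_psi1 unfolding h1_def kk_def by measurable
  then show ?thesis unfolding h_def[abs_def] by measurable
qed

lemma eps_nonneg: "0 \<le> eps" and eps_le: "eps \<le> 2/81"
  using eps_bound unfolding eps_def by auto

lemma h_bound: "\<bar>h x\<bar> \<le> 1/\<beta> + eps / c + s0/\<beta>"
proof -
  have a: "\<bar>h1 x\<bar> \<le> 1/\<beta> + eps / c"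
  proof -
    have "\<bar>h1 x\<bar> \<le> \<bar>sin (kk x)\<bar> / \<beta> + eps / c"
      unfolding h1_def using abs_triangle_ineq[of "sin (kk x) / \<beta>" "eps / c"] bpos cpos eps_nonneg
      by (simp add: abs_divide)
    also have "\<bar>sin (kk x)\<bar> / \<beta> \<le> 1 / \<beta>" using bpos by (intro divide_right_mono) auto
    finally show ?thesis by simp
  qed
  have "0 \<le> s0/\<beta>" "0 \<le> eps/c" "0 \<le> 1/\<beta>" using bpos cpos eps_nonneg by (auto simp: s0_def)
  then show ?thesis using a unfolding h_def by auto
qed

lemma H1_psi: "has_H1_deriv psi h"
proof -
  define B where "B = 1/\<beta> + eps / c + s0/\<beta>"
  have i1: "set_integrable lborel {0..1} h"
    by (rule set_integrable_bounded_meas[OF h_meas h_bound])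
  have i2: "set_integrable lborel {0..1} (\<lambda>x. (h x)\<^sup>2)"
  proof (rule set_integrable_bounded_meas[where B="B\<^sup>2"])
    show "(\<lambda>x. (h x)\<^sup>2) \<in> borel_measurable lborel" using h_meas by measurable
    fix x
    have "\<bar>h x\<bar>\<^sup>2 \<le> B\<^sup>2" unfolding B_def by (rule power_mono[OF h_bound]) simp
    then show "\<bar>(h x)\<^sup>2\<bar> \<le> B\<^sup>2" by simp
  qed
  have r: "psi x = psi 0 + (LINT t:{0..x}|lborel. h t)" if x: "x \<in> {0..1}" for x
  proof -
    have "set_integrable lborel {0..x} h" by (rule set_integrable_subset[OF i1]) (use x in auto)
    then have e: "(LINT t:{0..x}|lborel. h t) = integral {0..x} h"
      by (rule set_borel_integral_eq_integral(2))
    have "(h has_integral (psi x - psi 0)) {0..x}"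
    proof (rule fundamental_theorem_of_calculus_interior_strong[where S="{2*c, 1-\<beta>}"])
      show "finite {2*c, 1-\<beta>}" by simp
      show "0 \<le> x" using x by simp
      show "continuous_on {0..x} psi" using cont_psi by (rule continuous_on_subset) simp
      fix y assume "y \<in> {0<..<x} - {2*c, 1-\<beta>}"
      then have "(psi has_real_derivative h y) (at y)" using d_psi by auto
      then show "(psi has_vector_derivative h y) (at y)"
        by (simp add: has_real_derivative_iff_has_vector_derivative)
    qed
    then have "integral {0..x} h = psi x - psi 0" by (rule integral_unique)
    then show ?thesis using e by simp
  qed
  show ?thesis unfolding has_H1_deriv_def using i1 i2 r by blast
qed

lemma cont_psi1: "continuous_on S psi1"
  using d_psi1 by (metis DERIV_isCont continuous_at_imp_continuous_on)

lemma cont_kk: "continuous_on S kk"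
  unfolding kk_def[abs_def] using bpos by (intro continuous_intros) auto

lemma cont_h1: "continuous_on S h1"
  unfolding h1_def[abs_def] using bpos cpos by (intro continuous_intros cont_kk) auto

lemma cont_psi3: "continuous_on S psi3"
  using d_psi3 by (metis DERIV_isCont continuous_at_imp_continuous_on)

definition "G x = (h x)\<^sup>2 + (sin (psi x))\<^sup>2 / \<beta>\<^sup>2"
definition "G1 x = (h1 x)\<^sup>2 + (sin (psi1 x))\<^sup>2 / \<beta>\<^sup>2"
definition "G3 x = (s0 / \<beta>)\<^sup>2 + (sin (psi3 x))\<^sup>2 / \<beta>\<^sup>2"

lemma cont_G1: "continuous_on S G1"
  unfolding G1_def[abs_def] using bpos by (intro continuous_intros cont_h1 cont_psi1) auto

lemma cont_G3: "continuous_on S G3"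
  unfolding G3_def[abs_def] using bpos by (intro continuous_intros cont_psi3) auto

lemma piece1_int: "G integrable_on {0..2*c}" and piece1_eq: "integral {0..2*c} G = integral {0..2*c} G1"
proof -
  have eq: "G x = G1 x" if "x \<in> {0..2*c}" for x using that by (simp add: G_def G1_def h_def psi_def)
  show "G integrable_on {0..2*c}"
    by (rule integrable_spike_finite[where S="{}" and f=G1]) (use eq integrable_continuous_interval[OF cont_G1] in auto)
  show "integral {0..2*c} G = integral {0..2*c} G1" by (rule integral_cong) (rule eq)
qed

lemma piece2_int: "G integrable_on {2*c..1-\<beta>}" and piece2_eq: "integral {2*c..1-\<beta>} G = 0"
proof -
  have eq: "G x = 0" if "x \<in> {2*c..1-\<beta>} - {2*c}" for x using that by (simp add: G_def h_def psi_def)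
  show "G integrable_on {2*c..1-\<beta>}"
    by (rule integrable_spike_finite[where S="{2*c}" and f="\<lambda>_. 0"]) (use eq in auto)
  have "integral {2*c..1-\<beta>} G = integral {2*c..1-\<beta>} (\<lambda>_. 0::real)"
    by (rule integral_spike[where S="{2*c}"]) (use eq in auto)
  then show "integral {2*c..1-\<beta>} G = 0" by simp
qed

lemma piece3_int: "G integrable_on {1-\<beta>..1}" and piece3_eq: "integral {1-\<beta>..1} G = integral {1-\<beta>..1} G3"
proof -
  have eq: "G x = G3 x" if "x \<in> {1-\<beta>..1} - {1-\<beta>}" for x using that c2 by (simp add: G_def G3_def h_def psi_def)
  show "G integrable_on {1-\<beta>..1}"
    by (rule integrable_spike_finite[where S="{1-\<beta>}" and f=G3]) (use eq integrable_continuous_interval[OF cont_G3] in auto)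
  show "integral {1-\<beta>..1} G = integral {1-\<beta>..1} G3"
    by (rule integral_spike[where S="{1-\<beta>}"]) (use eq in auto)
qed

lemma piece3_bound: "integral {1-\<beta>..1} G3 \<le> 2 * s0\<^sup>2 / \<beta>"
proof -
  have "integral {1-\<beta>..1} G3 \<le> integral {1-\<beta>..1} (\<lambda>_. 2 * s0\<^sup>2 / \<beta>\<^sup>2)"
  proof (rule integral_le)
    show "G3 integrable_on {1-\<beta>..1}" by (rule integrable_continuous_interval[OF cont_G3])
    show "(\<lambda>_. 2 * s0\<^sup>2 / \<beta>\<^sup>2) integrable_on {1-\<beta>..1}" by (rule integrable_const_ivl)
    fix x assume x: "x \<in> {1-\<beta>..1}"
    define t where "t = s0 * (x - (1 - \<beta>)) / \<beta>"
    have t: "0 \<le> t" "t \<le> s0" using x bpos unfolding t_def s0_def by (auto simp: field_simps)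
    have "(sin (psi3 x))\<^sup>2 = (sin t)\<^sup>2" unfolding psi3_def t_def by simp
    also have "\<dots> \<le> t\<^sup>2"
    proof -
      have "\<bar>sin t\<bar>\<^sup>2 \<le> \<bar>t\<bar>\<^sup>2" by (rule power_mono[OF abs_sin_x_le_abs_x]) simp
      then show ?thesis by simp
    qed
    also have "\<dots> \<le> s0\<^sup>2" using t by (intro power_mono) auto
    finally have "(sin (psi3 x))\<^sup>2 / \<beta>\<^sup>2 \<le> s0\<^sup>2 / \<beta>\<^sup>2" by (intro divide_right_mono) auto
    then show "G3 x \<le> 2 * s0\<^sup>2 / \<beta>\<^sup>2" unfolding G3_def by (simp add: power_divide)
  qed
  also have "\<dots> = \<beta> * (2 * s0\<^sup>2 / \<beta>\<^sup>2)" using bpos by simp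
  also have "\<dots> = 2 * s0\<^sup>2 / \<beta>" using bpos by (simp add: power2_eq_square)
  finally show ?thesis .
qed

lemma piece1_bound: "integral {0..2*c} G1 \<le> 4 / \<beta> + 2 * c * (eps / c + eps / \<beta>)\<^sup>2"
proof -
  define A where "A x = 2 * h1 x * sin (psi1 x) / \<beta>" for x
  define R where "R x = (h1 x - sin (psi1 x) / \<beta>)\<^sup>2" for x
  have GAR: "G1 x = A x + R x" for x
    unfolding G1_def A_def R_def using bpos by (simp add: power2_eq_square field_simps)
  have intA: "(A has_integral (4 / \<beta>)) {0..2*c}"
  proof -
    have "(A has_integral ((- 2 * cos (psi1 (2*c)) / \<beta>) - (- 2 * cos (psi1 0) / \<beta>))) {0..2*c}"
    proof (rule fundamental_theorem_of_calculus)
      show "0 \<le> 2 * c" using cpos by simp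
      fix x assume "x \<in> {0..2*c}"
      have "((\<lambda>x. - 2 * cos (psi1 x) / \<beta>) has_real_derivative (- 2 * (- sin (psi1 x) * h1 x) / \<beta>)) (at x)"
        using d_psi1 bpos by (auto intro!: derivative_eq_intros)
      moreover have "- 2 * (- sin (psi1 x) * h1 x) / \<beta> = A x" unfolding A_def by simp
      ultimately show "((\<lambda>x. - 2 * cos (psi1 x) / \<beta>) has_vector_derivative A x) (at x within {0..2*c})"
        by (simp add: has_real_derivative_iff_has_vector_derivative has_vector_derivative_at_within)
    qed
    then show ?thesis using psi1_0 psi1_2c by simp
  qed
  have Rb: "R x \<le> (eps / c + eps / \<beta>)\<^sup>2" if x: "x \<in> {0..2*c}" for x
  proof -
    have "\<bar>sin (kk x) - sin (psi1 x)\<bar> \<le> \<bar>kk x - psi1 x\<bar>" by (rule sin_lip)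
    also have "\<bar>kk x - psi1 x\<bar> = eps * \<bar>x / c - 1\<bar>" unfolding psi1_def using eps_nonneg by (simp add: abs_mult)
    also have "\<dots> \<le> eps * 1" using x cpos eps_nonneg by (intro mult_left_mono) (auto simp: field_simps abs_le_iff)
    finally have sl: "\<bar>sin (kk x) - sin (psi1 x)\<bar> \<le> eps" by simp
    have "h1 x - sin (psi1 x) / \<beta> = eps / c + (sin (kk x) - sin (psi1 x)) / \<beta>"
      unfolding h1_def by (simp add: diff_divide_distrib)
    then have "\<bar>h1 x - sin (psi1 x) / \<beta>\<bar> \<le> \<bar>eps / c\<bar> + \<bar>sin (kk x) - sin (psi1 x)\<bar> / \<beta>"
      using abs_triangle_ineq[of "eps / c" "(sin (kk x) - sin (psi1 x)) / \<beta>"] bpos by (simp add: abs_divide)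
    also have "\<dots> \<le> eps / c + eps / \<beta>"
      using sl bpos cpos eps_nonneg by (auto intro: divide_right_mono)
    finally have "\<bar>h1 x - sin (psi1 x) / \<beta>\<bar> \<le> eps / c + eps / \<beta>" .
    then have "\<bar>h1 x - sin (psi1 x) / \<beta>\<bar>\<^sup>2 \<le> (eps / c + eps / \<beta>)\<^sup>2" by (rule power_mono) simp
    then show ?thesis unfolding R_def by simp
  qed
  have intR: "R integrable_on {0..2*c}"
    unfolding R_def[abs_def] using bpos by (intro integrable_continuous_interval continuous_intros cont_h1 cont_psi1) auto
  have "integral {0..2*c} G1 = integral {0..2*c} A + integral {0..2*c} R"
    unfolding GAR using integral_add[OF has_integral_integrable[OF intA] intR] .
  also have "integral {0..2*c} A = 4 / \<beta>" using intA by (rule integral_unique)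
  also have "integral {0..2*c} R \<le> integral {0..2*c} (\<lambda>_. (eps / c + eps / \<beta>)\<^sup>2)"
    by (rule integral_le[OF intR]) (use Rb in auto)
  also have "\<dots> = 2 * c * (eps / c + eps / \<beta>)\<^sup>2" using cpos by simp
  finally show ?thesis by simp
qed

lemma energy_bound:
  "\<beta> / 2 * (integral {0..1} (\<lambda>x. (h x)\<^sup>2) + integral {0..1} (\<lambda>x. (sin (psi x))\<^sup>2) / \<beta>\<^sup>2) \<le> 2 + 1/162 + 1/16"
proof -
  have i23: "G integrable_on {2*c..1}"
    by (rule Henstock_Kurzweil_Integration.integrable_combine[OF c2 _ piece2_int piece3_int]) (use bpos in simp)
  have "integral {0..2*c} G + integral {2*c..1} G = integral {0..1} G"
    by (rule Henstock_Kurzweil_Integration.integral_combine) (use cpos c2 bpos in simp, use cpos c2 bpos in simp,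
        rule Henstock_Kurzweil_Integration.integrable_combine[OF _ _ piece1_int i23], use cpos c2 bpos in simp, use cpos c2 bpos in simp)
  moreover have "integral {2*c..1-\<beta>} G + integral {1-\<beta>..1} G = integral {2*c..1} G"
    by (rule Henstock_Kurzweil_Integration.integral_combine[OF c2 _ i23]) (use bpos in simp)
  ultimately have tot: "integral {0..1} G = integral {0..2*c} G1 + integral {1-\<beta>..1} G3"
    using piece1_eq piece2_eq piece3_eq by simp
  have hb: "has_H1_deriv psi h" by (rule H1_psi)
  have split: "integral {0..1} G = integral {0..1} (\<lambda>x. (h x)\<^sup>2) + integral {0..1} (\<lambda>x. (sin (psi x))\<^sup>2) / \<beta>\<^sup>2"
  proof -
    have c: "(\<lambda>x. (sin (psi x))\<^sup>2 / \<beta>\<^sup>2) integrable_on {0..1}"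
      using bpos by (intro integrable_continuous_interval continuous_intros continuous_on_subset[OF cont_psi]) auto
    show ?thesis unfolding G_def[abs_def] using integral_add[OF H1_basic(2)[OF hb] c] by simp
  qed
  have epsq: "2 * c * (eps / c + eps / \<beta>)\<^sup>2 \<le> 1 / (81 * \<beta>)"
  proof -
    have "2 * c * (eps / c + eps / \<beta>)\<^sup>2 = (81/4) * eps\<^sup>2 / \<beta>"
      using bpos unfolding cb by (simp add: power2_eq_square field_simps)
    also have "\<dots> \<le> (81/4) * (2/81)\<^sup>2 / \<beta>"
      using eps_nonneg eps_le bpos by (intro divide_right_mono mult_left_mono power_mono) auto
    also have "\<dots> = 1 / (81 * \<beta>)" by (simp add: power2_eq_square field_simps)
    finally show ?thesis .
  qed
  have "integral {0..1} G \<le> 4 / \<beta> + 1 / (81 * \<beta>) + 2 * s0\<^sup>2 / \<beta>"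
    using tot piece1_bound piece3_bound epsq by linarith
  then have "\<beta> / 2 * integral {0..1} G \<le> \<beta> / 2 * (4 / \<beta> + 1 / (81 * \<beta>) + 2 * s0\<^sup>2 / \<beta>)"
    using bpos by (intro mult_left_mono) auto
  also have "\<dots> = 2 + 1/162 + 1/16" using bpos by (simp add: s0_def field_simps)
  finally show ?thesis using split by simp
qed

end




lemma H1_C1:
  assumes cP: "continuous_on {0..1} P"
    and d: "\<And>s. s \<in> {0..1} \<Longrightarrow> (phi has_real_derivative P s) (at s within {0..1})"
  shows "has_H1_deriv phi P"
proof -
  have i1: "set_integrable lborel {0..1} P" by (rule borel_integrable_atLeastAtMost'[OF cP])
  have i2: "set_integrable lborel {0..1} (\<lambda>x. (P x)\<^sup>2)"
    by (rule borel_integrable_atLeastAtMost') (intro continuous_intros cP)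
  have r: "phi x = phi 0 + (LINT t:{0..x}|lborel. P t)" if x: "x \<in> {0..1}" for x
  proof -
    have "set_integrable lborel {0..x} P" by (rule set_integrable_subset[OF i1]) (use x in auto)
    then have e: "(LINT t:{0..x}|lborel. P t) = integral {0..x} P"
      by (rule set_borel_integral_eq_integral(2))
    have "(P has_integral (phi x - phi 0)) {0..x}"
    proof (rule fundamental_theorem_of_calculus)
      show "0 \<le> x" using x by simp
      fix y assume y: "y \<in> {0..x}"
      have "(phi has_real_derivative P y) (at y within {0..x})"
        by (rule has_field_derivative_subset[OF d]) (use x y in auto)
      then show "(phi has_vector_derivative P y) (at y within {0..x})"
        by (simp add: has_real_derivative_iff_has_vector_derivative)
    qed
    then have "integral {0..x} P = phi x - phi 0" by (rule integral_unique)
    then show ?thesis using e by simp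
  qed
  show ?thesis unfolding has_H1_deriv_def using i1 i2 r by blast
qed

lemma energy_lower:
  assumes bpos: "0 < \<beta>" and cP: "continuous_on {0..1} P" and cp: "continuous_on {0..1} phi"
    and d: "\<And>s. s \<in> {0..1} \<Longrightarrow> (phi has_real_derivative P s) (at s within {0..1})"
    and z: "phi 0 = 0"
  shows "integral {0..1} (\<lambda>x. (P x)\<^sup>2) + integral {0..1} (\<lambda>x. (sin (phi x))\<^sup>2) / \<beta>\<^sup>2 \<ge> 2 * (1 - cos (phi 1)) / \<beta>"
proof -
  have "integral {0..1} (\<lambda>x. (P x)\<^sup>2) + integral {0..1} (\<lambda>x. (sin (phi x))\<^sup>2) / \<beta>\<^sup>2
      = integral {0..1} (\<lambda>x. (P x)\<^sup>2 + (sin (phi x))\<^sup>2 / \<beta>\<^sup>2)"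
    using integral_add[of "\<lambda>x. (P x)\<^sup>2" "{0..1}" "\<lambda>x. (sin (phi x))\<^sup>2 / \<beta>\<^sup>2"] bpos
    by (simp add: integrable_continuous_interval continuous_intros cP cp)
  also have "\<dots> \<ge> integral {0..1} (\<lambda>x. 2 * (P x * sin (phi x)) / \<beta>)"
  proof (rule integral_le)
    show "(\<lambda>x. 2 * (P x * sin (phi x)) / \<beta>) integrable_on {0..1}"
      using bpos by (intro integrable_continuous_interval continuous_intros cP cp) auto
    show "(\<lambda>x. (P x)\<^sup>2 + (sin (phi x))\<^sup>2 / \<beta>\<^sup>2) integrable_on {0..1}"
      using bpos by (intro integrable_continuous_interval continuous_intros cP cp) auto
    fix x
    have "0 \<le> (P x - sin (phi x) / \<beta>)\<^sup>2" by simp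
    then show "2 * (P x * sin (phi x)) / \<beta> \<le> (P x)\<^sup>2 + (sin (phi x))\<^sup>2 / \<beta>\<^sup>2"
      using bpos by (simp add: power2_eq_square field_simps)
  qed
  also have "integral {0..1} (\<lambda>x. 2 * (P x * sin (phi x)) / \<beta>) = 2 * (1 - cos (phi 1)) / \<beta>"
  proof -
    have "((\<lambda>x. 2 * (P x * sin (phi x)) / \<beta>) has_integral ((- 2 * cos (phi 1) / \<beta>) - (- 2 * cos (phi 0) / \<beta>))) {0..1}"
    proof (rule fundamental_theorem_of_calculus)
      fix x :: real assume x: "x \<in> {0..1}"
      have "((\<lambda>x. - 2 * cos (phi x) / \<beta>) has_real_derivative (- 2 * (- sin (phi x) * P x) / \<beta>)) (at x within {0..1})"
        using d[OF x] bpos by (auto intro!: derivative_eq_intros)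
      then show "((\<lambda>x. - 2 * cos (phi x) / \<beta>) has_vector_derivative 2 * (P x * sin (phi x)) / \<beta>) (at x within {0..1})"
        by (simp add: has_real_derivative_iff_has_vector_derivative mult.commute)
    qed simp
    then have "integral {0..1} (\<lambda>x. 2 * (P x * sin (phi x)) / \<beta>) = (- 2 * cos (phi 1) / \<beta>) - (- 2 * cos (phi 0) / \<beta>)"
      by (rule integral_unique)
    then show ?thesis using z bpos by (simp add: field_simps)
  qed
  finally show ?thesis .
qed

lemma ode_unique:
  fixes phi u f :: "real \<Rightarrow> real"
  assumes pq: "0 \<le> p" "q \<le> 1" "p \<le> a" "a \<le> q"
    and dphi: "\<And>s. s \<in> {0..1} \<Longrightarrow> (phi has_real_derivative f (phi s)) (at s within {0..1})"
    and du: "\<And>x. x \<in> {p..q} \<Longrightarrow> (u has_real_derivative f (u x)) (at x within {p..q})"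
    and lip: "\<And>y1 y2. \<bar>f y1 - f y2\<bar> \<le> L * \<bar>y1 - y2\<bar>"
    and init: "phi a = u a"
  shows "\<forall>x\<in>{p..q}. phi x = u x"
proof (rule gronwall_unique[of p a q phi "\<lambda>x. f (phi x)" u "\<lambda>x. f (u x)" L, OF pq(3,4)])
  fix x assume x: "x \<in> {p..q}"
  show "(phi has_real_derivative f (phi x)) (at x within {p..q})"
    by (rule has_field_derivative_subset[OF dphi]) (use x pq in auto)
  show "(u has_real_derivative f (u x)) (at x within {p..q})" by (rule du[OF x])
  show "\<bar>f (phi x) - f (u x)\<bar> \<le> L * \<bar>phi x - u x\<bar>" by (rule lip)
qed (rule init)

lemma deriv_reflect:
  assumes "\<And>s. s \<in> {0..1} \<Longrightarrow> (phi has_real_derivative P s) (at s within {0..1})"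
    and sub: "\<And>x. x \<in> S \<Longrightarrow> T - x \<in> {0..1}" and x: "x \<in> S"
  shows "((\<lambda>x. pi - phi (T - x)) has_real_derivative P (T - x)) (at x within S)"
proof -
  have a: "(phi has_real_derivative P (T - x)) (at ((\<lambda>x. T - x) x) within ((\<lambda>x. T - x) ` S))"
    by (rule has_field_derivative_subset[OF assms(1)]) (use sub x in auto)
  have b: "((\<lambda>x. T - x) has_real_derivative -1) (at x within S)"
    by (auto intro!: derivative_eq_intros)
  have "(phi \<circ> (\<lambda>x. T - x) has_real_derivative P (T - x) * -1) (at x within S)"
    by (rule DERIV_image_chain[OF a b])
  then have "((\<lambda>x. phi (T - x)) has_real_derivative - P (T - x)) (at x within S)"
    by (simp add: o_def)
  then have "((\<lambda>x. pi - phi (T - x)) has_real_derivative 0 - - P (T - x)) (at x within S)"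
    by (intro DERIV_diff DERIV_const)
  then show ?thesis by simp
qed

lemma deriv_shift:
  assumes "\<And>s. s \<in> {0..1} \<Longrightarrow> (phi has_real_derivative P s) (at s within {0..1})"
    and sub: "\<And>x. x \<in> S \<Longrightarrow> x + T \<in> {0..1}" and x: "x \<in> S"
  shows "((\<lambda>x. phi (x + T) - pi) has_real_derivative P (x + T)) (at x within S)"
proof -
  have a: "(phi has_real_derivative P (x + T)) (at ((\<lambda>x. x + T) x) within ((\<lambda>x. x + T) ` S))"
    by (rule has_field_derivative_subset[OF assms(1)]) (use sub x in auto)
  have b: "((\<lambda>x. x + T) has_real_derivative 1) (at x within S)"
    by (auto intro!: derivative_eq_intros)
  have "(phi \<circ> (\<lambda>x. x + T) has_real_derivative P (x + T) * 1) (at x within S)"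
    by (rule DERIV_image_chain[OF a b])
  then have "((\<lambda>x. phi (x + T)) has_real_derivative P (x + T)) (at x within S)"
    by (simp add: o_def)
  then have "((\<lambda>x. phi (x + T) - pi) has_real_derivative P (x + T) - 0) (at x within S)"
    by (intro DERIV_diff DERIV_const)
  then show ?thesis by simp
qed

lemma f_lip:
  fixes C \<beta> :: real
  assumes C: "0 < C" and b: "0 < \<beta>"
  defines "f \<equiv> \<lambda>y. sqrt (C + (sin y)\<^sup>2 / \<beta>\<^sup>2)"
  shows "\<bar>f y1 - f y2\<bar> \<le> (1 / (\<beta>\<^sup>2 * sqrt C)) * \<bar>y1 - y2\<bar>"
proof -
  have fge: "sqrt C \<le> f y" for y unfolding f_def using C by (intro real_sqrt_le_mono) auto
  have sC: "0 < sqrt C" using C by simp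
  have fsq: "(f y)\<^sup>2 = C + (sin y)\<^sup>2 / \<beta>\<^sup>2" for y unfolding f_def using C by (simp add: add_pos_nonneg)
  have pos: "0 < f y1 + f y2" using fge[of y1] fge[of y2] sC by linarith
  have "(f y1 - f y2) * (f y1 + f y2) = ((sin y1)\<^sup>2 - (sin y2)\<^sup>2) / \<beta>\<^sup>2"
    using fsq[of y1] fsq[of y2] by (simp add: power2_eq_square algebra_simps diff_divide_distrib)
  then have eq: "f y1 - f y2 = ((sin y1)\<^sup>2 - (sin y2)\<^sup>2) / \<beta>\<^sup>2 / (f y1 + f y2)"
    using pos by (metis nonzero_mult_div_cancel_right less_irrefl)
  have "\<bar>f y1 - f y2\<bar> = \<bar>(sin y1)\<^sup>2 - (sin y2)\<^sup>2\<bar> / \<beta>\<^sup>2 / (f y1 + f y2)"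
    unfolding eq using pos by (simp add: abs_divide)
  also have "\<dots> \<le> \<bar>y1 - y2\<bar> / \<beta>\<^sup>2 / (f y1 + f y2)"
    using pos b by (intro divide_right_mono sin_sq_lip) auto
  also have "\<dots> \<le> \<bar>y1 - y2\<bar> / \<beta>\<^sup>2 / sqrt C"
  proof -
    have "sqrt C \<le> f y1 + f y2" using fge[of y1] fge[of y2] sC by linarith
    moreover have "0 < (f y1 + f y2) * sqrt C" using pos sC by simp
    ultimately show ?thesis using b by (intro divide_left_mono) auto
  qed
  also have "\<dots> = (1 / (\<beta>\<^sup>2 * sqrt C)) * \<bar>y1 - y2\<bar>" by simp
  finally show ?thesis .
qed




lemma main_fixed:
  fixes phi :: "real \<Rightarrow> real"
  assumes bpos: "0 < \<beta>" and b17: "17 * \<beta> \<le> 1" and kpos: "\<kappa> > 0" and kt: "\<kappa> * \<beta> > 1 / pi"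
    and min: "is_minimizer \<beta> \<kappa> phi" and T0: "0 < T / 2" and T1: "T / 2 < 1"
    and phT: "phi (T / 2) = pi / 2"
  shows "T \<le> 1 \<and> (\<forall>x\<in>{0..T}. phi x = pi - phi (T - x)) \<and> phi T = pi \<and>
         (\<forall>x\<in>{0..1 - T}. phi (x + T) = pi + phi x)"
proof -
  have b0: "\<beta> \<noteq> 0" using bpos by simp
  obtain g where hg: "has_H1_deriv phi g" and z: "phi 0 = 0"
    using min unfolding is_minimizer_def J_class_def H1_def by blast
  have cp: "continuous_on {0..1} phi" by (rule H1_basic(4)[OF hg])
  have EL': "\<And>s. s \<in> {0..1} \<Longrightarrow> phi s = 2 * \<kappa> * s - 1/(2*\<beta>\<^sup>2) * integral {0..1} (\<lambda>x. sin (2 * phi x) * min x s)"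
    using EL[OF min hg z _ b0] by blast
  define P where "P \<equiv> \<lambda>s. 2 * \<kappa> - 1/(2*\<beta>\<^sup>2) * (integral {0..1} (\<lambda>x. sin (2 * phi x)) - integral {0..s} (\<lambda>x. sin (2 * phi x)))"
  note R = regularity[OF cp b0 EL']
  have d1: "\<And>s. s \<in> {0..1} \<Longrightarrow> (phi has_real_derivative P s) (at s within {0..1})" unfolding P_def by (rule R(1))
  have d2: "\<And>s. s \<in> {0..1} \<Longrightarrow> (P has_real_derivative sin (2 * phi s) / (2*\<beta>\<^sup>2)) (at s within {0..1})" unfolding P_def by (rule R(2))
  have P1: "P 1 = 2 * \<kappa>" unfolding P_def by (rule R(3))
  have cP: "continuous_on {0..1} P" unfolding P_def by (rule R(4))
  obtain C where C: "\<And>s. s \<in> {0..1} \<Longrightarrow> (P s)\<^sup>2 - (sin (phi s))\<^sup>2 / \<beta>\<^sup>2 = C"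
    using first_integral[OF d1 d2 b0] by blast
  have C0: "C = (P 0)\<^sup>2" using C[of 0] z by simp
  have a01: "T/2 \<in> {0..1}" using T0 T1 by simp
  have Cpos: "C > 0"
  proof (rule ccontr)
    assume "\<not> C > 0"
    then have Cz: "C = 0" using C0 by (metis not_less power2_less_0 order_antisym_conv zero_le_power2)
    have "\<forall>x\<in>{0..1}. phi x = (\<lambda>_. 0) x"
    proof (rule gronwall_unique[of 0 0 1 phi P "\<lambda>_. 0" "\<lambda>_. 0" "1/\<beta>"])
      fix x :: real assume x: "x \<in> {0..1}"
      show "(phi has_real_derivative P x) (at x within {0..1})" by (rule d1[OF x])
      show "((\<lambda>_. 0) has_real_derivative 0) (at x within {0..1})" by simp
      have "(P x)\<^sup>2 = (sin (phi x))\<^sup>2 / \<beta>\<^sup>2" using C[OF x] Cz by simp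
      then have "\<bar>P x\<bar> = \<bar>sin (phi x)\<bar> / \<beta>"
        using bpos by (metis abs_divide abs_of_pos power_divide real_sqrt_abs)
      also have "\<dots> \<le> \<bar>phi x\<bar> / \<beta>" using bpos abs_sin_x_le_abs_x by (intro divide_right_mono) auto
      finally show "\<bar>P x - 0\<bar> \<le> 1 / \<beta> * \<bar>phi x - 0\<bar>" by simp
    qed (use z in auto)
    then have "phi (T/2) = 0" using a01 by auto
    then show False using phT by simp
  qed
  have Pnz: "P s \<noteq> 0" if s: "s \<in> {0..1}" for s
  proof
    assume "P s = 0"
    then have "C = - (sin (phi s))\<^sup>2 / \<beta>\<^sup>2" using C[OF s] by simp
    moreover have "0 \<le> (sin (phi s))\<^sup>2 / \<beta>\<^sup>2" by simp
    ultimately show False using Cpos by simp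
  qed
  have Ppos: "P s > 0" if s: "s \<in> {0..1}" for s
  proof (rule ccontr)
    assume "\<not> P s > 0"
    then have "P s \<le> 0" by simp
    moreover have "0 \<le> P 1" using P1 kpos by simp
    moreover have "continuous_on {s..1} P" using cP by (rule continuous_on_subset) (use s in auto)
    ultimately obtain x where "s \<le> x" "x \<le> 1" "P x = 0" using IVT'[of P s 0 1] s by auto
    then show False using Pnz[of x] s by auto
  qed
  define f where "f \<equiv> \<lambda>y. sqrt (C + (sin y)\<^sup>2 / \<beta>\<^sup>2)"
  define L where "L = 1 / (\<beta>\<^sup>2 * sqrt C)"
  have lip: "\<And>y1 y2. \<bar>f y1 - f y2\<bar> \<le> L * \<bar>y1 - y2\<bar>"
    unfolding f_def L_def by (rule f_lip[OF Cpos bpos])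
  have Pf: "P s = f (phi s)" if s: "s \<in> {0..1}" for s
  proof -
    have "(P s)\<^sup>2 = C + (sin (phi s))\<^sup>2 / \<beta>\<^sup>2" using C[OF s] by simp
    then have "sqrt ((P s)\<^sup>2) = f (phi s)" unfolding f_def by simp
    then show ?thesis using Ppos[OF s] by simp
  qed
  have dphi: "\<And>s. s \<in> {0..1} \<Longrightarrow> (phi has_real_derivative f (phi s)) (at s within {0..1})"
    using d1 Pf by simp
  have f_refl: "f (pi - y) = f y" for y unfolding f_def by simp
  have f_shift: "f (y + pi) = f y" for y unfolding f_def by simp
  have mono: "phi x < phi y" if "0 \<le> x" "x < y" "y \<le> 1" for x y
    by (rule incr_within_strict[OF that(2) that(1) that(3) d1]) (use Ppos that in auto)
  define p where "p = max 0 (T - 1)"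
  define q where "q = min 1 T"
  have sym: "\<forall>x\<in>{p..q}. phi x = pi - phi (T - x)"
  proof (rule ode_unique[where f=f and L=L and a="T/2"])
    show "0 \<le> p" "q \<le> 1" "p \<le> T/2" "T/2 \<le> q" using T0 T1 by (auto simp: p_def q_def max_def min_def)
    show "\<And>s. s \<in> {0..1} \<Longrightarrow> (phi has_real_derivative f (phi s)) (at s within {0..1})" by (rule dphi)
    show "\<bar>f y1 - f y2\<bar> \<le> L * \<bar>y1 - y2\<bar>" for y1 y2 by (rule lip)
    show "phi (T/2) = pi - phi (T - T/2)" using phT by simp
    fix x assume x: "x \<in> {p..q}"
    have sub: "\<And>x. x \<in> {p..q} \<Longrightarrow> T - x \<in> {0..1}" by (auto simp: p_def q_def)
    have "((\<lambda>x. pi - phi (T - x)) has_real_derivative P (T - x)) (at x within {p..q})"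
      by (rule deriv_reflect[OF d1 sub x])
    moreover have "P (T - x) = f (pi - phi (T - x))" using Pf[OF sub[OF x]] f_refl by simp
    ultimately show "((\<lambda>x. pi - phi (T - x)) has_real_derivative f (pi - phi (T - x))) (at x within {p..q})"
      by simp
  qed
  have T_le: "T \<le> 1"
  proof (rule ccontr)
    assume "\<not> T \<le> 1"
    then have T1': "1 < T" by simp
    have pq: "p = T - 1" "q = 1" using T1' by (auto simp: p_def q_def)
    define th where "th = phi 1"
    have "1 \<in> {p..q}" using pq T1' T1 by auto
    then have "phi 1 = pi - phi (T - 1)" using sym by blast
    moreover have "phi 0 < phi (T - 1)" by (rule mono) (use T1' T1 in auto)
    ultimately have th_lt: "th < pi" using z unfolding th_def by simp
    have th_ge: "pi/2 \<le> th" using mono[of "T/2" 1] T0 T1 phT unfolding th_def by simp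
    have hP: "has_H1_deriv phi P" by (rule H1_C1[OF cP d1])
    have lowX: "integral {0..1} (\<lambda>x. (P x)\<^sup>2) + integral {0..1} (\<lambda>x. (sin (phi x))\<^sup>2) / \<beta>\<^sup>2 \<ge> 2 * (1 - cos th) / \<beta>"
      unfolding th_def by (rule energy_lower[OF bpos cP cp d1 z])
    have Fphi: "F_energy \<beta> \<kappa> phi P \<ge> (1 - cos th) / (4 * \<beta>) - \<kappa> / 2 * th"
    proof -
      have "F_energy \<beta> \<kappa> phi P = 1/8 * (integral {0..1} (\<lambda>x. (P x)\<^sup>2) + integral {0..1} (\<lambda>x. (sin (phi x))\<^sup>2) / \<beta>\<^sup>2) - \<kappa>/2 * th"
        using F_eq[OF hP] z unfolding th_def by simp
      moreover have "1/8 * (2 * (1 - cos th) / \<beta>) = (1 - cos th) / (4 * \<beta>)" using bpos by (simp add: field_simps)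
      moreover have gen: "\<And>F X Y c Z::real. F = 1/8*X - c \<Longrightarrow> 1/8*Y = Z \<Longrightarrow> Y \<le> X \<Longrightarrow> Z - c \<le> F"
        by (simp add: field_simps)
      ultimately show ?thesis using lowX by blast
    qed
    interpret comp \<beta> using bpos b17 by unfold_locales
    have J: "psi \<in> J_class" by (rule J_classI[OF H1_psi psi_0])
    have Fpsi: "F_energy \<beta> \<kappa> psi h \<le> (2 + 1/162 + 1/16) / (4 * \<beta>) - \<kappa> / 2 * (pi + 1/4)"
    proof -
      have "F_energy \<beta> \<kappa> psi h = 1/8 * (integral {0..1} (\<lambda>x. (h x)\<^sup>2) + integral {0..1} (\<lambda>x. (sin (psi x))\<^sup>2) / \<beta>\<^sup>2) - \<kappa>/2 * (pi + 1/4)"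
        using F_eq[OF H1_psi] psi_0 psi_1 by simp
      moreover have "1/8 * (integral {0..1} (\<lambda>x. (h x)\<^sup>2) + integral {0..1} (\<lambda>x. (sin (psi x))\<^sup>2) / \<beta>\<^sup>2)
          = (\<beta> / 2 * (integral {0..1} (\<lambda>x. (h x)\<^sup>2) + integral {0..1} (\<lambda>x. (sin (psi x))\<^sup>2) / \<beta>\<^sup>2)) / (4 * \<beta>)"
        using bpos by (simp add: field_simps)
      moreover have "(\<beta> / 2 * (integral {0..1} (\<lambda>x. (h x)\<^sup>2) + integral {0..1} (\<lambda>x. (sin (psi x))\<^sup>2) / \<beta>\<^sup>2)) / (4 * \<beta>)
          \<le> (2 + 1/162 + 1/16) / (4 * \<beta>)"
        using energy_bound bpos by (intro divide_right_mono) auto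
      moreover have gen: "\<And>F X W Z c::real. F = 1/8*X - c \<Longrightarrow> 1/8*X = W \<Longrightarrow> W \<le> Z \<Longrightarrow> F \<le> Z - c"
        by (simp add: field_simps)
      ultimately show ?thesis by blast
    qed
    have le: "F_energy \<beta> \<kappa> phi P \<le> F_energy \<beta> \<kappa> psi h"
      using min hP J H1_psi unfolding is_minimizer_def by blast
    have key: "(2 + 1/162 + 1/16) - 2 * (\<kappa> * \<beta>) * (pi + 1/4) < (1 - cos th) - 2 * (\<kappa> * \<beta>) * th"
    proof -
      define K where "K = \<kappa> * \<beta>"
      have pos: "0 < pi + 1/4 - th" using th_lt by simp
      have f1: "2 * (1/pi) * (pi + 1/4 - th) < 2 * K * (pi + 1/4 - th)"
        using kt pos unfolding K_def by (intro mult_strict_right_mono) auto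
      have f2: "2 * (1/pi) * (pi + 1/4 - th) = 2 + 1/(2*pi) - 2 * th / pi" by (simp add: field_simps)
      have f3: "cos th \<le> 1 - 2 * th / pi" by (rule cos_chord) (use th_ge th_lt in auto)
      have f4: "1/8 < 1/(2*pi)" using pi_less_4 by (simp add: field_simps)
      have f5: "2 * K * (pi + 1/4 - th) = 2 * K * (pi + 1/4) - 2 * K * th" by (simp add: algebra_simps)
      have "(2 + 1/162 + 1/16) - 2 * K * (pi + 1/4) < (1 - cos th) - 2 * K * th"
        using f1 f2 f3 f4 f5 by linarith
      then show ?thesis unfolding K_def by simp
    qed
    have "F_energy \<beta> \<kappa> psi h < F_energy \<beta> \<kappa> phi P"
    proof -
      have "(2 + 1/162 + 1/16) / (4 * \<beta>) - \<kappa> / 2 * (pi + 1/4)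
          = ((2 + 1/162 + 1/16) - 2 * (\<kappa> * \<beta>) * (pi + 1/4)) / (4 * \<beta>)"
        using bpos by (simp add: field_simps)
      also have "\<dots> < ((1 - cos th) - 2 * (\<kappa> * \<beta>) * th) / (4 * \<beta>)"
        using key bpos by (intro divide_strict_right_mono) auto
      also have "\<dots> = (1 - cos th) / (4 * \<beta>) - \<kappa> / 2 * th"
        using bpos by (simp add: field_simps)
      finally show ?thesis using Fpsi Fphi by linarith
    qed
    then show False using le by simp
  qed
  have pq0: "p = 0" "q = T" using T_le T0 by (auto simp: p_def q_def)
  have symT: "\<forall>x\<in>{0..T}. phi x = pi - phi (T - x)" using sym unfolding pq0 .
  have "0 \<in> {0..T}" using T0 by simp
  then have "phi 0 = pi - phi (T - 0)" using symT by blast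
  then have phiT: "phi T = pi" using z by simp
  have shift: "\<forall>x\<in>{0..1 - T}. phi x = phi (x + T) - pi"
  proof (rule ode_unique[where f=f and L=L and a=0])
    show "0 \<le> (0::real)" "1 - T \<le> 1" "0 \<le> (0::real)" "0 \<le> 1 - T" using T0 T_le by auto
    show "\<And>s. s \<in> {0..1} \<Longrightarrow> (phi has_real_derivative f (phi s)) (at s within {0..1})" by (rule dphi)
    show "\<bar>f y1 - f y2\<bar> \<le> L * \<bar>y1 - y2\<bar>" for y1 y2 by (rule lip)
    show "phi 0 = phi (0 + T) - pi" using phiT z by simp
    fix x assume x: "x \<in> {0..1 - T}"
    have sub: "\<And>x. x \<in> {0..1 - T} \<Longrightarrow> x + T \<in> {0..1}" using T0 by auto
    have "((\<lambda>x. phi (x + T) - pi) has_real_derivative P (x + T)) (at x within {0..1 - T})"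
      by (rule deriv_shift[OF d1 sub x])
    moreover have "P (x + T) = f (phi (x + T) - pi)"
      using Pf[OF sub[OF x]] f_shift[of "phi (x + T) - pi"] by simp
    ultimately show "((\<lambda>x. phi (x + T) - pi) has_real_derivative f (phi (x + T) - pi)) (at x within {0..1 - T})"
      by simp
  qed
  have shift': "\<forall>x\<in>{0..1 - T}. phi (x + T) = pi + phi x"
  proof
    fix x assume "x \<in> {0..1 - T}"
    then have "phi x = phi (x + T) - pi" using shift by blast
    then show "phi (x + T) = pi + phi x" by simp
  qed
  show ?thesis using T_le symT phiT shift' by blast
qed


theorem proposition9:
  fixes \<kappa> :: "real \<Rightarrow> real"
  assumes "\<forall>\<beta>>0. \<kappa> \<beta> > 0 \<and> \<kappa> \<beta> * \<beta> > 1 / pi"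
  shows "\<exists>\<beta>0>0. \<forall>\<beta>. 0 < \<beta> \<and> \<beta> < \<beta>0 \<longrightarrow>
           (\<forall>phi T. is_minimizer \<beta> (\<kappa> \<beta>) phi \<longrightarrow> 0 < T / 2 \<longrightarrow> T / 2 < 1 \<longrightarrow>
              phi (T / 2) = pi / 2 \<longrightarrow>
              T \<le> 1 \<and>
              (\<forall>x\<in>{0..T}. phi x = pi - phi (T - x)) \<and>
              phi T = pi \<and>
              (\<forall>x\<in>{0..1 - T}. phi (x + T) = pi + phi x))"
proof -
  have "\<forall>\<beta>. 0 < \<beta> \<and> \<beta> < 1/17 \<longrightarrow>
           (\<forall>phi T. is_minimizer \<beta> (\<kappa> \<beta>) phi \<longrightarrow> 0 < T / 2 \<longrightarrow> T / 2 < 1 \<longrightarrow>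
              phi (T / 2) = pi / 2 \<longrightarrow>
              T \<le> 1 \<and>
              (\<forall>x\<in>{0..T}. phi x = pi - phi (T - x)) \<and>
              phi T = pi \<and>
              (\<forall>x\<in>{0..1 - T}. phi (x + T) = pi + phi x))"
  proof (intro allI impI)
    fix \<beta> :: real and phi :: "real \<Rightarrow> real" and T :: real
    assume b: "0 < \<beta> \<and> \<beta> < 1/17" and m: "is_minimizer \<beta> (\<kappa> \<beta>) phi"
      and t0: "0 < T / 2" and t1: "T / 2 < 1" and p: "phi (T / 2) = pi / 2"
    have k: "\<kappa> \<beta> > 0" "\<kappa> \<beta> * \<beta> > 1 / pi" using assms b by auto
    show "T \<le> 1 \<and> (\<forall>x\<in>{0..T}. phi x = pi - phi (T - x)) \<and> phi T = pi \<and>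
              (\<forall>x\<in>{0..1 - T}. phi (x + T) = pi + phi x)"
      by (rule main_fixed[OF _ _ k m t0 t1 p]) (use b in auto)
  qed
  moreover have "(0::real) < 1/17" by simp
  ultimately show ?thesis by blast
qed

end
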